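(* Assume the standing assumptions (P1)–(P6) described in the context, and let $(f_0,t_0)\in\mathrm{Dom}\,\mathcal P$. Then there exist $R',T',\mathcal E,\ell$ such that: (i) $R'\in(0,+\infty]$, $T'\in(t_0,+\infty]$ and $B(f_0,R')\times[t_0,T')\subset\mathrm{Dom}\,\mathcal P$; (ii) $\mathcal E\in C([t_0,T'),[0,+\infty))$, $\mathcal E(t_0)=0$, and $\|f_0-e^{(t-t_0)\mathcal A}f_0-\int_{t_0}^t e^{(t-s)\mathcal A}\mathcal P(f_0,s)\,ds\|\le\mathcal E(t)$ for all $t\in[t_0,T')$; (iii) $\ell\in C([0,R')\times[t_0,T'),[0,+\infty))$ is nondecreasing in its first variable and $\|\mathcal P(f,t)-\mathcal P(f_0,t)\|_-\le\ell(\|f-f_0\|,t)$ for all $(f,t)\in B(f_0,R')\times[t_0,T')$. Moreover, for any $R',T',\mathcal E,\ell$ satisfying (i)–(iii): (a) there exist $R\in(0,R')$ and $T\in(t_0,T']$ such that $\mathcal E(t)+\int_{t_0}^t u_-(t-s)\,\ell(R,s)\,ds\le R$ for all $t\in[t_0,T)$; (b) for any such $R,T$, the Volterra problem VP$(f_0,t_0)$ has a solution $\varphi$ on $[t_0,T)$, and $\|\varphi(t)-f_0\|\le R$ for all $t\in[t_0,T)$.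
   Context: All Banach spaces are over a common field ($\mathbb R$ or $\mathbb C$). For Banach spaces $X,Y$, $X\hookrightarrow Y$ means that $X$ is a dense linear subspace of $Y$ and the inclusion is continuous. Standing assumptions: (P1) $F_+,F,F_-$ are Banach spaces with norms $\|\cdot\|_+,\|\cdot\|,\|\cdot\|_-$ and $F_+\hookrightarrow F\hookrightarrow F_-$; $B(f_0,r):=\{f\in F:\|f-f_0\|<r\}$ for $r\in(0,+\infty]$. (P2) $\mathcal A:F_+\to F_-$ is linear and on $F_+$ the norm $\|\cdot\|_+$ is equivalent to $f\mapsto\|f\|_-+\|\mathcal Af\|_-$. (P3) $\mathcal A$, viewed as a densely defined operator in $F_-$ with domain $F_+$, generates a strongly continuous semigroup $(e^{t\mathcal A})_{t\ge0}$ on $F_-$. (P4) $e^{t\mathcal A}(F)\subset F$ for $t\ge0$, the map $(f,t)\mapsto e^{t\mathcal A}f$ is continuous from $F\times[0,\infty)$ to $F$, and $u\in C([0,\infty),(0,\infty))$ satisfies $\|e^{t\mathcal A}f\|\le u(t)\|f\|$. (P5) $e^{t\mathcal A}(F_-)\subset F$ for $t>0$, the map $(f,t)\mapsto e^{t\mathcal A}f$ is continuous from $F_-\times(0,\infty)$ to $F$, and $u_-\in C((0,\infty),(0,\infty))$ satisfies $\|e^{t\mathcal A}f\|\le u_-(t)\|f\|_-$ for $t>0$, $f\in F_-$, with $u_-(t)=O(t^{-(1-\sigma)})$ as $t\to0^+$ for some $\sigma\in(0,1]$. (P6) $\mathcal P:\mathrm{Dom}\,\mathcal P\subset F\times\mathbb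 R\to F_-$; the domain is semi-open (for each $(f_0,t_0)\in\mathrm{Dom}\,\mathcal P$ there are $\delta,r\in(0,+\infty]$ with $B(f_0,r)\times[t_0,t_0+\delta)\subset\mathrm{Dom}\,\mathcal P$), and for every closed bounded $\mathcal C\subset F\times\mathbb R$ with $\mathcal C\subset\mathrm{Dom}\,\mathcal P$ there are $L,M\ge0$ with $\|\mathcal P(f,t)-\mathcal P(f',t')\|_-\le L\|f-f'\|+M|t-t'|$ for all $(f,t),(f',t')\in\mathcal C$. For $(f_0,t_0)\in\mathrm{Dom}\,\mathcal P$, a solution of the Volterra problem VP$(f_0,t_0)$ on $[t_0,T)$ ($T\in(t_0,+\infty]$) is a $\varphi\in C([t_0,T),F)$ whose graph $\{(\varphi(t),t)\}$ lies in $\mathrm{Dom}\,\mathcal P$ and such that $\varphi(t)=e^{(t-t_0)\mathcal A}f_0+\int_{t_0}^t e^{(t-s)\mathcal A}\mathcal P(\varphi(s),s)\,ds$ for all $t\in[t_0,T)$. *)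

theory Defs
  imports "HOL-Analysis.Analysis" "HOL-Library.Landau_Symbols"
begin

definition Ico_e :: "real \<Rightarrow> ereal \<Rightarrow> real set" where
  "Ico_e a b = {t. a \<le> t \<and> ereal t < b}"

definition ball_e :: "'a::metric_space \<Rightarrow> ereal \<Rightarrow> 'a set" where
  "ball_e x r = {y. ereal (dist y x) < r}"

definition dense_embedding :: "('a::real_normed_vector \<Rightarrow> 'b::real_normed_vector) \<Rightarrow> bool" where
  "dense_embedding i \<longleftrightarrow> bounded_linear i \<and> inj i \<and> closure (range i) = UNIV"

definition c0_semigroup :: "(real \<Rightarrow> 'a::real_normed_vector \<Rightarrow> 'a) \<Rightarrow> bool" where
  "c0_semigroup S \<longleftrightarrow>
     (\<forall>t\<ge>0. bounded_linear (S t)) \<and> S 0 = id \<and>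
     (\<forall>t\<ge>0. \<forall>s\<ge>0. S (t + s) = S t \<circ> S s) \<and>
     (\<forall>x. continuous_on {0..} (\<lambda>t. S t x))"

text \<open>The operator with domain range J, J p \<mapsto> A p, is the generator of S.\<close>
definition generates :: "(real \<Rightarrow> 'a::real_normed_vector \<Rightarrow> 'a) \<Rightarrow> ('p \<Rightarrow> 'a) \<Rightarrow> ('p \<Rightarrow> 'a) \<Rightarrow> bool" where
  "generates S J A \<longleftrightarrow> c0_semigroup S \<and>
     (\<forall>x. x \<in> range J \<longleftrightarrow> (\<exists>y. ((\<lambda>h. (S h x - x) /\<^sub>R h) \<longlongrightarrow> y) (at_right 0))) \<and>
     (\<forall>p. ((\<lambda>h. (S h (J p) - J p) /\<^sub>R h) \<longlongrightarrow> A p) (at_right 0))"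

text \<open>Solution of VP(f0,t0) on [t0,T).  SF t f = e^{tA} f on F (t \<ge> 0),
  Em t g = e^{tA} g : F_- \<rightarrow> F (t > 0).\<close>
definition VP_solution ::
  "(real \<Rightarrow> 'f::real_normed_vector \<Rightarrow> 'f) \<Rightarrow> (real \<Rightarrow> 'm \<Rightarrow> 'f) \<Rightarrow> ('f \<Rightarrow> real \<Rightarrow> 'm)
   \<Rightarrow> ('f \<times> real) set \<Rightarrow> 'f \<Rightarrow> real \<Rightarrow> ereal \<Rightarrow> (real \<Rightarrow> 'f) \<Rightarrow> bool" where
  "VP_solution SF Em P D f0 t0 T \<phi> \<longleftrightarrow>
     ereal t0 < T \<and> continuous_on (Ico_e t0 T) \<phi> \<and>
     (\<forall>t\<in>Ico_e t0 T. (\<phi> t, t) \<in> D \<and>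
        ((\<lambda>s. Em (t - s) (P (\<phi> s) s)) has_integral (\<phi> t - SF (t - t0) f0)) {t0..t})"

definition local_data ::
  "(real \<Rightarrow> 'f::real_normed_vector \<Rightarrow> 'f) \<Rightarrow> (real \<Rightarrow> 'm::real_normed_vector \<Rightarrow> 'f) \<Rightarrow> ('f \<Rightarrow> real \<Rightarrow> 'm)
   \<Rightarrow> ('f \<times> real) set \<Rightarrow> 'f \<Rightarrow> real
   \<Rightarrow> ereal \<Rightarrow> ereal \<Rightarrow> (real \<Rightarrow> real) \<Rightarrow> (real \<Rightarrow> real \<Rightarrow> real) \<Rightarrow> bool" where
  "local_data SF Em P D f0 t0 R' T' Er ell \<longleftrightarrow>
     0 < R' \<and> ereal t0 < T' \<and> ball_e f0 R' \<times> Ico_e t0 T' \<subseteq> D \<and>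
     continuous_on (Ico_e t0 T') Er \<and> (\<forall>t\<in>Ico_e t0 T'. 0 \<le> Er t) \<and> Er t0 = 0 \<and>
     (\<forall>t\<in>Ico_e t0 T'.
        norm (f0 - SF (t - t0) f0 - integral {t0..t} (\<lambda>s. Em (t - s) (P f0 s))) \<le> Er t) \<and>
     continuous_on (Ico_e 0 R' \<times> Ico_e t0 T') (\<lambda>(r, t). ell r t) \<and>
     (\<forall>r\<in>Ico_e 0 R'. \<forall>t\<in>Ico_e t0 T'. 0 \<le> ell r t) \<and>
     (\<forall>t\<in>Ico_e t0 T'. mono_on (Ico_e 0 R') (\<lambda>r. ell r t)) \<and>
     (\<forall>f\<in>ball_e f0 R'. \<forall>t\<in>Ico_e t0 T'. norm (P f t - P f0 t) \<le> ell (norm (f - f0)) t)"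

end

theory Submission
  imports Defs
begin



lemma pow_int_right:
  fixes \<sigma> b c c' :: real
  assumes s: "0 < \<sigma>" and cc: "c \<le> c'" and cb: "c' \<le> b"
  shows "((\<lambda>s. (b - s) powr (\<sigma> - 1)) has_integral ((b - c) powr \<sigma> - (b - c') powr \<sigma>) / \<sigma>) {c..c'}"
proof -
  define F where "F x = - ((b - x) powr \<sigma>) / \<sigma>" for x
  have "((\<lambda>s. (b - s) powr (\<sigma> - 1)) has_integral (F c' - F c)) {c..c'}"
  proof (rule fundamental_theorem_of_calculus_interior[OF cc])
    show "continuous_on {c..c'} F" unfolding F_def
      using cb s by (intro continuous_intros continuous_on_powr') auto
    fix x assume x: "x \<in> {c<..<c'}"
    then have bx: "b - x > 0" using cb by auto
    have "((\<lambda>x. (b - x) powr \<sigma>) has_real_derivative \<sigma> * (b - x) powr (\<sigma> - 1) * (-1)) (at x)"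
      using DERIV_fun_powr[of "\<lambda>x. b - x" "-1" x \<sigma>] bx
      by (auto intro!: derivative_eq_intros)
    then have "(F has_real_derivative (b - x) powr (\<sigma> - 1)) (at x)"
      unfolding F_def using s bx by (auto intro!: derivative_eq_intros)
    then show "(F has_vector_derivative (b - x) powr (\<sigma> - 1)) (at x)"
      by (simp add: has_real_derivative_iff_has_vector_derivative)
  qed
  moreover have "F c' - F c = ((b - c) powr \<sigma> - (b - c') powr \<sigma>) / \<sigma>"
    unfolding F_def using s by (simp add: field_simps)
  ultimately show ?thesis by simp
qed

lemma pow_int_left:
  fixes \<sigma> a c c' :: real
  assumes s: "0 < \<sigma>" and cc: "c \<le> c'" and ac: "a \<le> c"
  shows "((\<lambda>s. (s - a) powr (\<sigma> - 1)) has_integral ((c' - a) powr \<sigma> - (c - a) powr \<sigma>) / \<sigma>) {c..c'}"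
proof -
  define F where "F x = ((x - a) powr \<sigma>) / \<sigma>" for x
  have "((\<lambda>s. (s - a) powr (\<sigma> - 1)) has_integral (F c' - F c)) {c..c'}"
  proof (rule fundamental_theorem_of_calculus_interior[OF cc])
    show "continuous_on {c..c'} F" unfolding F_def
      using ac s by (intro continuous_intros continuous_on_powr') auto
    fix x assume x: "x \<in> {c<..<c'}"
    then have bx: "x - a > 0" using ac by auto
    have "((\<lambda>x. (x - a) powr \<sigma>) has_real_derivative \<sigma> * (x - a) powr (\<sigma> - 1) * 1) (at x)"
      using DERIV_fun_powr[of "\<lambda>x. x - a" "1" x \<sigma>] bx
      by (auto intro!: derivative_eq_intros)
    then have "(F has_real_derivative (x - a) powr (\<sigma> - 1)) (at x)"
      unfolding F_def using s bx by (auto intro!: derivative_eq_intros)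
    then show "(F has_vector_derivative (x - a) powr (\<sigma> - 1)) (at x)"
      by (simp add: has_real_derivative_iff_has_vector_derivative)
  qed
  moreover have "F c' - F c = ((c' - a) powr \<sigma> - (c - a) powr \<sigma>) / \<sigma>"
    unfolding F_def using s by (simp add: field_simps)
  ultimately show ?thesis by simp
qed




lemma hake:
  fixes f :: "real \<Rightarrow> 'b::banach"
  assumes ab: "a < b" and s: "0 < \<sigma>" and cf: "continuous_on {a..<b} f"
    and bd: "\<And>s. s \<in> {a..<b} \<Longrightarrow> norm (f s) \<le> C * (b - s) powr (\<sigma> - 1)"
  shows "f integrable_on {a..b}"
proof -
  have "norm (f a) \<le> C * (b - a) powr (\<sigma> - 1)" using bd[of a] ab by auto
  then have "0 \<le> C * (b - a) powr (\<sigma> - 1)" using norm_ge_zero[of "f a"] by linarith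
  then have C: "0 \<le> C" using ab by (simp add: zero_le_mult_iff)
  define F where "F c = integral {a..c} f" for c
  have intc: "f integrable_on {c'..c}" if "a \<le> c'" "c < b" for c c'
    by (rule integrable_continuous_real) (rule continuous_on_subset[OF cf], use that in auto)
  have key: "norm (F c' - F c) \<le> C / \<sigma> * (b - c) powr \<sigma>"
    if "a \<le> c" "c \<le> c'" "c' < b" for c c'
  proof -
    have "F c' - F c = integral {c..c'} f"
      using Henstock_Kurzweil_Integration.integral_combine[where a=a and c=c and b=c' and f=f] intc[of a c'] that unfolding F_def by (simp add: algebra_simps)
    also have "norm \<dots> \<le> integral {c..c'} (\<lambda>s. C * (b - s) powr (\<sigma> - 1))"
    proof (rule integral_norm_bound_integral)
      show "f integrable_on {c..c'}" using intc that by auto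
      show "(\<lambda>s. C * (b - s) powr (\<sigma> - 1)) integrable_on {c..c'}"
        using has_integral_mult_right[OF pow_int_right[OF s that(2), of b], of C] that by (auto intro: has_integral_integrable)
      show "norm (f x) \<le> C * (b - x) powr (\<sigma> - 1)" if "x \<in> {c..c'}" for x
        using bd[of x] that \<open>a \<le> c\<close> \<open>c' < b\<close> by auto
    qed
    also have "\<dots> = C * (((b - c) powr \<sigma> - (b - c') powr \<sigma>) / \<sigma>)"
      using pow_int_right[OF s that(2), of b] that by (simp add: integral_unique)
    also have "\<dots> \<le> C / \<sigma> * (b - c) powr \<sigma>"
      using C s by (simp add: field_simps)
    finally show ?thesis .
  qed
  define cs where "cs n = b - (b - a) / Suc n" for n :: nat
  have cs_ge: "a \<le> cs n" for n
  proof -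
    have "(b - a) / Suc n \<le> (b - a)" using ab by (simp add: divide_le_eq)
    then show ?thesis unfolding cs_def by simp
  qed
  have cs_lt: "cs n < b" for n unfolding cs_def using ab by simp
  have cs_lim: "cs \<longlonglongrightarrow> b"
  proof -
    have "(\<lambda>n. (b - a) / real (Suc n)) \<longlonglongrightarrow> 0"
      by (intro tendsto_divide_0[OF tendsto_const]) (simp add: filterlim_at_top_imp_at_infinity filterlim_tendsto_add_at_top[OF tendsto_const filterlim_real_sequentially])
    then have "(\<lambda>n. b - (b - a) / real (Suc n)) \<longlonglongrightarrow> b - 0" by (intro tendsto_intros)
    then show ?thesis unfolding cs_def by simp
  qed
  have bd0: "(\<lambda>n. C / \<sigma> * (b - cs n) powr \<sigma>) \<longlonglongrightarrow> 0"
  proof -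
    have "(\<lambda>n. b - cs n) \<longlonglongrightarrow> 0" using tendsto_diff[OF tendsto_const cs_lim, of b] by simp
    then have "(\<lambda>n. (b - cs n) powr \<sigma>) \<longlonglongrightarrow> 0"
      by (rule tendsto_zero_powrI) (use s cs_lt in \<open>auto intro!: always_eventually less_imp_le\<close>)
    then show ?thesis using tendsto_mult[OF tendsto_const, of _ 0 _ "C/\<sigma>"] by simp
  qed
  have "Cauchy (\<lambda>n. F (cs n))"
  proof (rule metric_CauchyI)
    fix e :: real assume e: "0 < e"
    obtain M where M: "\<And>n. n \<ge> M \<Longrightarrow> norm (C / \<sigma> * (b - cs n) powr \<sigma>) < e"
      using LIMSEQ_D[OF bd0 e] by auto
    have csmono: "cs m \<le> cs n" if "m \<le> n" for m n
    proof -
      have "(b - a) / Suc n \<le> (b - a) / Suc m"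
        using ab that by (intro divide_left_mono) auto
      then show ?thesis unfolding cs_def by simp
    qed
    have "dist (F (cs m)) (F (cs n)) < e" if "m \<ge> M" "n \<ge> M" for m n
    proof -
      have "dist (F (cs m)) (F (cs n)) \<le> C / \<sigma> * (b - cs (min m n)) powr \<sigma>"
      proof (cases "m \<le> n")
        case True
        then show ?thesis using key[OF cs_ge csmono[OF True] cs_lt]
          by (simp add: dist_norm norm_minus_commute min_def)
      next
        case False
        then show ?thesis using key[OF cs_ge csmono cs_lt, of n m] 
          by (simp add: dist_norm min_def)
      qed
      also have "\<dots> \<le> norm (C / \<sigma> * (b - cs (min m n)) powr \<sigma>)" unfolding real_norm_def by (rule abs_ge_self)
      also have "\<dots> < e" using M[of "min m n"] that by auto
      finally show ?thesis .
    qed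
    then show "\<exists>M. \<forall>m\<ge>M. \<forall>n\<ge>M. dist (F (cs m)) (F (cs n)) < e" by blast
  qed
  then obtain L where L: "(\<lambda>n. F (cs n)) \<longlonglongrightarrow> L"
    using Cauchy_convergent_iff convergent_def by blast
  have Lb: "norm (F c - L) \<le> C / \<sigma> * (b - c) powr \<sigma>" if "a \<le> c" "c < b" for c
  proof (rule Lim_norm_ubound[of sequentially "\<lambda>n. F c - F (cs n)"])
    show "((\<lambda>n. F c - F (cs n)) \<longlonglongrightarrow> F c - L)" by (intro tendsto_intros L)
    have "eventually (\<lambda>n. cs n > c) sequentially"
      using order_tendstoD(1)[OF cs_lim \<open>c < b\<close>] .
    then show "eventually (\<lambda>n. norm (F c - F (cs n)) \<le> C / \<sigma> * (b - c) powr \<sigma>) sequentially"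
      by eventually_elim (use key[OF that(1) _ cs_lt] in \<open>auto simp: norm_minus_commute\<close>)
  qed simp
  define G where "G x = (if x < b then F x else L)" for x
  have Gc: "continuous_on {a..b} G"
    unfolding continuous_on_eq_continuous_within
  proof
    fix x assume x: "x \<in> {a..b}"
    show "continuous (at x within {a..b}) G"
    proof (cases "x < b")
      case True
      define x' where "x' = (x + b) / 2"
      have xx': "x < x'" "x' < b" using True unfolding x'_def by auto
      have "continuous_on {a..x'} F"
        unfolding F_def by (rule indefinite_integral_continuous_1) (rule intc, use xx' in auto)
      then have "continuous (at x within {a..x'}) F"
        using x xx' by (simp add: continuous_on_eq_continuous_within)
      then have "continuous (at x within {a..x'}) G"
        by (rule continuous_transform_within[of _ _ _ "x' - x"]) (use x xx' in \<open>auto simp: G_def dist_real_def\<close>)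
      moreover have "at x within {a..b} = at x within {a..x'}"
        by (rule at_within_nhd[of _ "{..<x'}"]) (use xx' x in auto)
      ultimately show ?thesis unfolding continuous_within by simp
    next
      case False
      then have xb: "x = b" using x by auto
      have "((\<lambda>y. G y - L) \<longlongrightarrow> 0) (at b within {a..b})"
      proof (rule Lim_null_comparison)
        show "eventually (\<lambda>y. norm (G y - L) \<le> C / \<sigma> * (b - y) powr \<sigma>) (at b within {a..b})"
          unfolding eventually_at_filter
          by (rule always_eventually) (use Lb in \<open>auto simp: G_def\<close>)
        have "((\<lambda>y. b - y) \<longlongrightarrow> 0) (at b within {a..b})"
          using tendsto_diff[OF tendsto_const tendsto_ident_at, of b b "{a..b}"] by simp
        then have "((\<lambda>y. (b - y) powr \<sigma>) \<longlongrightarrow> 0) (at b within {a..b})"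
          by (rule tendsto_zero_powrI) (auto simp: eventually_at_filter s)
        then show "((\<lambda>y. C / \<sigma> * (b - y) powr \<sigma>) \<longlongrightarrow> 0) (at b within {a..b})"
          using tendsto_mult[OF tendsto_const, of _ 0 _ "C/\<sigma>"] by simp
      qed
      then have "(G \<longlongrightarrow> L) (at b within {a..b})" by (rule LIM_zero_cancel)
      then show ?thesis using xb by (simp add: continuous_within G_def)
    qed
  qed
  have Gd: "(G has_vector_derivative f x) (at x)" if x: "x \<in> {a<..<b}" for x
  proof -
    define x' where "x' = (x + b) / 2"
    have xx': "x < x'" "x' < b" using x unfolding x'_def by auto
    have "continuous_on {a..x'} f" by (rule continuous_on_subset[OF cf]) (use xx' in auto)
    from integral_has_vector_derivative[OF this, of x] x xx'
    have "(F has_vector_derivative f x) (at x within {a..x'})" unfolding F_def by auto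
    then have "(F has_vector_derivative f x) (at x)"
      using at_within_Icc_at[of a x x'] x xx' by auto
    then show ?thesis
      by (rule has_vector_derivative_transform_within_open[of _ _ _ "{a<..<x'}"]) (use x xx' in \<open>auto simp: G_def\<close>)
  qed
  have "(f has_integral (G b - G a)) {a..b}"
    by (rule fundamental_theorem_of_calculus_interior) (use ab Gc Gd in auto)
  then show ?thesis by blast
qed




lemma nb_interior:
  fixes f :: "real \<Rightarrow> 'b::banach"
  assumes "f integrable_on {a..b}" "g integrable_on {a..b}"
    and "\<And>x. x \<in> {a<..<b} \<Longrightarrow> norm (f x) \<le> g x"
  shows "norm (integral {a..b} f) \<le> integral {a..b} g"
  using assms integral_norm_bound_integral[of f "{a<..<b}" g]
  by (simp add: integral_open_interval_real[of a b f] integral_open_interval_real[of a b g]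
      integrable_on_open_interval_real)

lemma le_interior:
  fixes f :: "real \<Rightarrow> real"
  assumes "f integrable_on {a..b}" "g integrable_on {a..b}"
    and "\<And>x. x \<in> {a<..<b} \<Longrightarrow> f x \<le> g x"
  shows "integral {a..b} f \<le> integral {a..b} g"
  using assms integral_le[of f "{a<..<b}" g]
  by (simp add: integral_open_interval_real[of a b f] integral_open_interval_real[of a b g]
      integrable_on_open_interval_real)

lemma nb_any:
  fixes f :: "real \<Rightarrow> 'b::banach"
  assumes "(g has_integral B) {a..b}" "0 \<le> B"
    and "\<And>x. x \<in> {a<..<b} \<Longrightarrow> norm (f x) \<le> g x"
  shows "norm (integral {a..b} f) \<le> B"
proof (cases "f integrable_on {a..b}")
  case True
  then show ?thesis using nb_interior[OF True has_integral_integrable[OF assms(1)] assms(3)]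
    assms(1) by (simp add: integral_unique)
next
  case False
  then show ?thesis using assms(2) by (simp add: not_integrable_integral)
qed

lemma le_any:
  fixes f :: "real \<Rightarrow> real"
  assumes "(g has_integral B) {a..b}" "0 \<le> B"
    and "\<And>x. x \<in> {a<..<b} \<Longrightarrow> f x \<le> g x"
  shows "integral {a..b} f \<le> B"
proof (cases "f integrable_on {a..b}")
  case True
  then show ?thesis using le_interior[OF True has_integral_integrable[OF assms(1)] assms(3)]
    assms(1) by (simp add: integral_unique)
next
  case False
  then show ?thesis using assms(2) by (simp add: not_integrable_integral)
qed

lemma sub_reflect:
  fixes f :: "real \<Rightarrow> 'b::real_normed_vector"
  assumes "(f has_integral I) {a..t}"
  shows "((\<lambda>\<tau>. f (t - \<tau>)) has_integral I) {0..t - a}"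
proof -
  have "((\<lambda>x. f (- x)) has_integral I) {-t..-a}" using assms by simp
  from has_integral_shift_real_ivl[OF this, of "-t"]
  show ?thesis by simp
qed

locale core =
  fixes Em :: "real \<Rightarrow> 'm::banach \<Rightarrow> 'f::banach" and u_m :: "real \<Rightarrow> real" and \<sigma> :: real
  assumes Em_lin: "\<And>t. t > 0 \<Longrightarrow> linear (Em t)"
  and Em_cont: "continuous_on (UNIV \<times> {0<..}) (\<lambda>(g, t). Em t g)"
  and um_cont: "continuous_on {0<..} u_m" and um_pos: "\<And>t. t > 0 \<Longrightarrow> 0 < u_m t"
  and Em_bd: "\<And>t g. t > 0 \<Longrightarrow> norm (Em t g) \<le> u_m t * norm g"
  and s0: "0 < \<sigma>" and s1: "\<sigma> \<le> 1"
  and um_O: "\<And>H. H > 0 \<Longrightarrow> \<exists>K>0. \<forall>\<tau>. 0 < \<tau> \<longrightarrow> \<tau> \<le> H \<longrightarrow> u_m \<tau> \<le> K * \<tau> powr (\<sigma> - 1)"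
begin

lemma Kbound:
  assumes "a \<le> b"
  obtains K where "K > 0" "\<And>s. s \<in> {a..<b} \<Longrightarrow> u_m (b - s) \<le> K * (b - s) powr (\<sigma> - 1)"
proof -
  obtain K where "K > 0" "\<forall>\<tau>. 0 < \<tau> \<longrightarrow> \<tau> \<le> b - a + 1 \<longrightarrow> u_m \<tau> \<le> K * \<tau> powr (\<sigma> - 1)"
    using um_O[of "b - a + 1"] assms by auto
  then show ?thesis using that[of K] by auto
qed

lemma bounded_on:
  fixes g :: "real \<Rightarrow> 'c::real_normed_vector"
  assumes "continuous_on {a..b} g"
  obtains G where "G \<ge> 0" "\<And>x. x \<in> {a..b} \<Longrightarrow> norm (g x) \<le> G"
proof -
  have "bounded (g ` {a..b})"
    by (rule compact_imp_bounded[OF compact_continuous_image[OF assms compact_Icc]])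
  then obtain B where "\<forall>x\<in>g ` {a..b}. norm x \<le> B" by (auto simp: bounded_iff)
  then have "\<And>x. x \<in> {a..b} \<Longrightarrow> norm (g x) \<le> max B 0" by (metis image_eqI max.coboundedI1)
  then show ?thesis using that[of "max B 0"] by auto
qed

lemma Em_comp_cont:
  fixes g :: "real \<Rightarrow> 'm"
  assumes "continuous_on S g" "continuous_on S h" "\<And>x. x \<in> S \<Longrightarrow> h x > 0"
  shows "continuous_on S (\<lambda>s. Em (h s) (g s))"
proof -
  have "continuous_on S (\<lambda>s. (\<lambda>(g, t). Em t g) (g s, h s))"
    by (rule continuous_on_compose2[OF Em_cont]) (use assms in \<open>auto intro!: continuous_intros\<close>)
  then show ?thesis by simp
qed

lemma um_comp_cont:
  assumes "continuous_on S h" "\<And>x. x \<in> S \<Longrightarrow> h x > 0"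
  shows "continuous_on S (\<lambda>s. u_m (h s))"
  by (rule continuous_on_compose2[OF um_cont assms(1)]) (use assms in auto)

lemma int_vec:
  fixes g :: "real \<Rightarrow> 'm"
  assumes cg: "continuous_on {a..b} g" and ab: "a \<le> b"
  shows "(\<lambda>s. Em (b - s) (g s)) integrable_on {a..b}"
proof (cases "a = b")
  case True then show ?thesis using integrable_on_refl[of _ b] by (simp add: cbox_interval)
next
  case False
  then have ab': "a < b" using ab by auto
  obtain G where G: "G \<ge> 0" "\<And>x. x \<in> {a..b} \<Longrightarrow> norm (g x) \<le> G" using bounded_on[OF cg] by blast
  obtain K where K: "K > 0" "\<And>s. s \<in> {a..<b} \<Longrightarrow> u_m (b - s) \<le> K * (b - s) powr (\<sigma> - 1)"
    using Kbound[OF ab] by blast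
  show ?thesis
  proof (rule hake[OF ab' s0])
    show "continuous_on {a..<b} (\<lambda>s. Em (b - s) (g s))"
      by (rule Em_comp_cont) (auto intro!: continuous_intros intro: continuous_on_subset[OF cg])
    fix s assume s: "s \<in> {a..<b}"
    have "norm (Em (b - s) (g s)) \<le> u_m (b - s) * norm (g s)" using Em_bd s by auto
    also have "\<dots> \<le> (K * (b - s) powr (\<sigma> - 1)) * G"
      using K(2)[OF s] G(2)[of s] s um_pos[of "b - s"] by (intro mult_mono) auto
    finally show "norm (Em (b - s) (g s)) \<le> (K * G) * (b - s) powr (\<sigma> - 1)" by (simp add: algebra_simps)
  qed
qed

lemma int_real:
  fixes h :: "real \<Rightarrow> real"
  assumes cg: "continuous_on {a..b} h" and ab: "a \<le> b"
  shows "(\<lambda>s. u_m (b - s) * h s) integrable_on {a..b}"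
proof (cases "a = b")
  case True then show ?thesis using integrable_on_refl[of _ b] by (simp add: cbox_interval)
next
  case False
  then have ab': "a < b" using ab by auto
  obtain G where G: "G \<ge> 0" "\<And>x. x \<in> {a..b} \<Longrightarrow> norm (h x) \<le> G" using bounded_on[OF cg] by blast
  obtain K where K: "K > 0" "\<And>s. s \<in> {a..<b} \<Longrightarrow> u_m (b - s) \<le> K * (b - s) powr (\<sigma> - 1)"
    using Kbound[OF ab] by blast
  show ?thesis
  proof (rule hake[OF ab' s0])
    show "continuous_on {a..<b} (\<lambda>s. u_m (b - s) * h s)"
      by (intro continuous_intros um_comp_cont) (auto intro!: continuous_intros intro: continuous_on_subset[OF cg])
    fix s assume s: "s \<in> {a..<b}"
    have "norm (u_m (b - s) * h s) = u_m (b - s) * norm (h s)" using um_pos[of "b - s"] s by (simp add: abs_mult)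
    also have "\<dots> \<le> (K * (b - s) powr (\<sigma> - 1)) * G"
      using K(2)[OF s] G(2)[of s] s um_pos[of "b - s"] by (intro mult_mono) auto
    finally show "norm (u_m (b - s) * h s) \<le> (K * G) * (b - s) powr (\<sigma> - 1)" by (simp add: algebra_simps)
  qed
qed

lemma int_norm_bound:
  fixes g :: "real \<Rightarrow> 'm"
  assumes cg: "continuous_on {a..b} g" and ab: "a \<le> b"
  shows "norm (integral {a..b} (\<lambda>s. Em (b - s) (g s))) \<le> integral {a..b} (\<lambda>s. u_m (b - s) * norm (g s))"
  by (rule nb_interior[OF int_vec[OF cg ab] int_real[OF _ ab]])
     (use cg Em_bd in \<open>auto intro!: continuous_intros\<close>)

end




context core begin

lemma J_est:
  fixes g :: "real \<Rightarrow> 'm"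
  assumes cg: "continuous_on {a..b} g" and G: "\<And>x. x \<in> {a..b} \<Longrightarrow> norm (g x) \<le> G"
    and K: "K > 0" "\<And>\<tau>. 0 < \<tau> \<Longrightarrow> \<tau> \<le> b - a \<Longrightarrow> u_m \<tau> \<le> K * \<tau> powr (\<sigma> - 1)"
    and tt: "a \<le> t'" "t' \<le> t" "t \<le> b"
    and om: "\<And>x x'. x \<in> {a..b} \<Longrightarrow> x' \<in> {a..b} \<Longrightarrow> \<bar>x - x'\<bar> \<le> t - t' \<Longrightarrow> norm (g x - g x') \<le> \<omega>"
  shows "norm (integral {a..t} (\<lambda>s. Em (t - s) (g s)) - integral {a..t'} (\<lambda>s. Em (t' - s) (g s)))
         \<le> K * \<omega> * (b - a) powr \<sigma> / \<sigma> + K * G * (t - t') powr \<sigma> / \<sigma>"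
proof -
  define k where "k t \<tau> = Em \<tau> (g (t - \<tau>))" for t \<tau>
  have sub: "integral {a..t} (\<lambda>s. Em (t - s) (g s)) = integral {0..t - a} (k t)"
    and intk: "k t integrable_on {0..t - a}"
    if "a \<le> t" "t \<le> b" for t
  proof -
    have "(\<lambda>s. Em (t - s) (g s)) integrable_on {a..t}"
      by (rule int_vec) (use that in \<open>auto intro: continuous_on_subset[OF cg]\<close>)
    from sub_reflect[OF integrable_integral[OF this]]
    have "(k t has_integral integral {a..t} (\<lambda>s. Em (t - s) (g s))) {0..t - a}"
      unfolding k_def by simp
    then show "integral {a..t} (\<lambda>s. Em (t - s) (g s)) = integral {0..t - a} (k t)"
      and "k t integrable_on {0..t - a}" by (auto simp: integral_unique)
  qed
  have "norm (g a) \<le> G" using G[of a] tt by auto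
  then have G0: "0 \<le> G" using norm_ge_zero[of "g a"] by linarith
  have "norm (g a - g a) \<le> \<omega>" using om[of a a] tt by auto
  then have om0: "0 \<le> \<omega>" by simp
  have split: "integral {0..t - a} (k t) = integral {0..t' - a} (k t) + integral {t' - a..t - a} (k t)"
    using Henstock_Kurzweil_Integration.integral_combine[where a=0 and c="t' - a" and b="t - a" and f="k t"]
      intk[of t] tt by auto
  have int1: "k t integrable_on {0..t' - a}"
    by (rule integrable_subinterval_real[OF intk[of t]]) (use tt in auto)
  have int2: "k t integrable_on {t' - a..t - a}"
    by (rule integrable_subinterval_real[OF intk[of t]]) (use tt in auto)
  have "integral {a..t} (\<lambda>s. Em (t - s) (g s)) - integral {a..t'} (\<lambda>s. Em (t' - s) (g s))
      = integral {0..t' - a} (\<lambda>\<tau>. k t \<tau> - k t' \<tau>) + integral {t' - a..t - a} (k t)"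
    using sub[of t] sub[of t'] split tt int1 intk[of t'] by (simp add: integral_diff)
  also have "norm \<dots> \<le> norm (integral {0..t' - a} (\<lambda>\<tau>. k t \<tau> - k t' \<tau>)) + norm (integral {t' - a..t - a} (k t))"
    by (rule norm_triangle_ineq)
  also have "\<dots> \<le> K * \<omega> * (b - a) powr \<sigma> / \<sigma> + K * G * (t - t') powr \<sigma> / \<sigma>"
  proof (rule add_mono)
    have "norm (integral {0..t' - a} (\<lambda>\<tau>. k t \<tau> - k t' \<tau>)) \<le> K * \<omega> * (((t' - a - 0) powr \<sigma> - (0 - 0) powr \<sigma>) / \<sigma>)"
    proof (rule nb_any)
      show "((\<lambda>\<tau>. K * \<omega> * (\<tau> - 0) powr (\<sigma> - 1)) has_integral K * \<omega> * (((t' - a - 0) powr \<sigma> - (0 - 0) powr \<sigma>) / \<sigma>)) {0..t' - a}"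
        by (rule has_integral_mult_right, rule pow_int_left[OF s0]) (use tt in auto)
      show "0 \<le> K * \<omega> * (((t' - a - 0) powr \<sigma> - (0 - 0) powr \<sigma>) / \<sigma>)"
        using K om0 s0 by simp
      fix \<tau> assume \<tau>: "\<tau> \<in> {0<..<t' - a}"
      have "k t \<tau> - k t' \<tau> = Em \<tau> (g (t - \<tau>) - g (t' - \<tau>))"
        unfolding k_def using Em_lin[of \<tau>] \<tau> by (simp add: linear_diff)
      also have "norm \<dots> \<le> u_m \<tau> * norm (g (t - \<tau>) - g (t' - \<tau>))" using Em_bd \<tau> by auto
      also have "\<dots> \<le> (K * \<tau> powr (\<sigma> - 1)) * \<omega>"
        using \<tau> tt um_pos[of \<tau>] K(1) by (intro mult_mono K(2) om) auto
      finally show "norm (k t \<tau> - k t' \<tau>) \<le> K * \<omega> * (\<tau> - 0) powr (\<sigma> - 1)" by (simp add: algebra_simps)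
    qed
    also have "\<dots> \<le> K * \<omega> * (b - a) powr \<sigma> / \<sigma>"
    proof -
      have "(t' - a) powr \<sigma> \<le> (b - a) powr \<sigma>" using tt s0 by (intro powr_mono2) auto
      then show ?thesis using K om0 s0 by (simp add: divide_right_mono mult_left_mono)
    qed
    finally show "norm (integral {0..t' - a} (\<lambda>\<tau>. k t \<tau> - k t' \<tau>)) \<le> K * \<omega> * (b - a) powr \<sigma> / \<sigma>" .
    have "norm (integral {t' - a..t - a} (k t)) \<le> K * G * (((t - a - (t' - a)) powr \<sigma> - (t' - a - (t' - a)) powr \<sigma>) / \<sigma>)"
    proof (rule nb_any)
      show "((\<lambda>\<tau>. K * G * (\<tau> - (t' - a)) powr (\<sigma> - 1)) has_integral K * G * (((t - a - (t' - a)) powr \<sigma> - (t' - a - (t' - a)) powr \<sigma>) / \<sigma>)) {t' - a..t - a}"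
        by (rule has_integral_mult_right, rule pow_int_left[OF s0]) (use tt in auto)
      show "0 \<le> K * G * (((t - a - (t' - a)) powr \<sigma> - (t' - a - (t' - a)) powr \<sigma>) / \<sigma>)"
        using K G0 s0 by simp
      fix \<tau> assume \<tau>: "\<tau> \<in> {t' - a<..<t - a}"
      have "norm (k t \<tau>) \<le> u_m \<tau> * norm (g (t - \<tau>))" unfolding k_def using Em_bd \<tau> tt by auto
      also have "\<dots> \<le> (K * \<tau> powr (\<sigma> - 1)) * G"
        using \<tau> tt um_pos[of \<tau>] K(1) by (intro mult_mono K(2) G) auto
      also have "\<dots> \<le> (K * (\<tau> - (t' - a)) powr (\<sigma> - 1)) * G"
        using \<tau> tt s1 K G0 by (intro mult_right_mono mult_left_mono powr_mono2') auto
      finally show "norm (k t \<tau>) \<le> K * G * (\<tau> - (t' - a)) powr (\<sigma> - 1)" by (simp add: algebra_simps)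
    qed
    then show "norm (integral {t' - a..t - a} (k t)) \<le> K * G * (t - t') powr \<sigma> / \<sigma>"
      using s0 by simp
  qed
  finally show ?thesis .
qed

lemma J_cont:
  fixes g :: "real \<Rightarrow> 'm"
  assumes cg: "continuous_on {a..b} g"
  shows "continuous_on {a..b} (\<lambda>t. integral {a..t} (\<lambda>s. Em (t - s) (g s)))"
proof (cases "a \<le> b")
  case False then show ?thesis by simp
next
  case ab: True
  obtain G where G: "G \<ge> 0" "\<And>x. x \<in> {a..b} \<Longrightarrow> norm (g x) \<le> G" using bounded_on[OF cg] by blast
  obtain K where K: "K > 0" "\<forall>\<tau>. 0 < \<tau> \<longrightarrow> \<tau> \<le> b - a + 1 \<longrightarrow> u_m \<tau> \<le> K * \<tau> powr (\<sigma> - 1)"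
    using um_O[of "b - a + 1"] ab by auto
  have K2: "\<And>\<tau>. 0 < \<tau> \<Longrightarrow> \<tau> \<le> b - a \<Longrightarrow> u_m \<tau> \<le> K * \<tau> powr (\<sigma> - 1)" using K by auto
  have uc: "uniformly_continuous_on {a..b} g" by (rule compact_uniformly_continuous[OF cg compact_Icc])
  define J where "J t = integral {a..t} (\<lambda>s. Em (t - s) (g s))" for t
  have main: "\<exists>d>0. \<forall>t\<in>{a..b}. \<forall>t'\<in>{a..b}. t' \<le> t \<longrightarrow> t - t' < d \<longrightarrow> norm (J t - J t') < e"
    if e: "e > 0" for e
  proof -
    define Hs where "Hs = (b - a) powr \<sigma>"
    have Hs: "Hs \<ge> 0" unfolding Hs_def by simp
    define \<omega> where "\<omega> = e * \<sigma> / (2 * (K * Hs + 1))"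
    have "0 \<le> K * Hs" using K Hs by simp
    then have "0 < 2 * (K * Hs + 1)" by (intro mult_pos_pos) auto
    then have \<omega>: "\<omega> > 0" unfolding \<omega>_def using e s0 by simp
    obtain d1 where d1: "d1 > 0" "\<And>x x'. x \<in> {a..b} \<Longrightarrow> x' \<in> {a..b} \<Longrightarrow> dist x' x < d1 \<Longrightarrow> dist (g x') (g x) < \<omega>"
      using uc \<omega> unfolding uniformly_continuous_on_def by metis
    define d2 where "d2 = (e * \<sigma> / (2 * (K * G + 1))) powr (1 / \<sigma>)"
    have KG0: "0 \<le> K * G" using K(1) G(1) by simp
    then have p2: "K * G + 1 > 0" by linarith
    then have "0 < 2 * (K * G + 1)" by (intro mult_pos_pos) auto
    then have d2: "d2 > 0" unfolding d2_def using e s0 by simp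
    have "norm (J t - J t') < e" if t: "t \<in> {a..b}" "t' \<in> {a..b}" "t' \<le> t" "t - t' < min d1 d2" for t t'
    proof -
      have "norm (J t - J t') \<le> K * \<omega> * (b - a) powr \<sigma> / \<sigma> + K * G * (t - t') powr \<sigma> / \<sigma>"
        unfolding J_def
      proof (rule J_est[OF cg G(2) K(1) K2])
        show "a \<le> t'" "t' \<le> t" "t \<le> b" using t by auto
        fix x x' assume x: "x \<in> {a..b}" "x' \<in> {a..b}" "\<bar>x - x'\<bar> \<le> t - t'"
        then have "dist x x' < d1" using t by (simp add: dist_real_def)
        from d1(2)[OF x(2) x(1) this] show "norm (g x - g x') \<le> \<omega>" by (simp add: dist_norm)
      qed
      also have "\<dots> < e / 2 + e / 2"
      proof (rule add_le_less_mono)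
        have p1: "K * Hs + 1 > 0" using K(1) Hs by (smt (verit) mult_nonneg_nonneg)
        have "K * \<omega> * (b - a) powr \<sigma> / \<sigma> = K * \<omega> * Hs / \<sigma>" unfolding Hs_def ..
        also have "\<dots> = e / 2 * (K * Hs / (K * Hs + 1))"
          unfolding \<omega>_def using s0 p1 by (simp add: divide_simps)
        finally have "K * \<omega> * (b - a) powr \<sigma> / \<sigma> = e / 2 * (K * Hs / (K * Hs + 1))" .
        also have "\<dots> \<le> e / 2 * 1" using e p1 by (intro mult_left_mono) (auto simp: divide_simps)
        finally show "K * \<omega> * (b - a) powr \<sigma> / \<sigma> \<le> e / 2" by simp
        have "(t - t') powr \<sigma> < d2 powr \<sigma>" using t s0 by (intro powr_less_mono2) auto
        also have "d2 powr \<sigma> = e * \<sigma> / (2 * (K * G + 1))"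
          unfolding d2_def using e s0 p2 by (simp add: powr_powr)
        finally have lt: "(t - t') powr \<sigma> < e * \<sigma> / (2 * (K * G + 1))" .
        have "K * G * (t - t') powr \<sigma> / \<sigma> \<le> (K * G + 1) * (t - t') powr \<sigma> / \<sigma>"
          using s0 by (intro divide_right_mono mult_right_mono) auto
        also have "\<dots> < (K * G + 1) * (e * \<sigma> / (2 * (K * G + 1))) / \<sigma>"
          using lt s0 p2 by (intro divide_strict_right_mono mult_strict_left_mono) auto
        also have "\<dots> = e / 2" using s0 p2 by (simp add: divide_simps)
        finally show "K * G * (t - t') powr \<sigma> / \<sigma> < e / 2" .
      qed
      finally show ?thesis by simp
    qed
    then show ?thesis using d1 d2 by (intro exI[of _ "min d1 d2"]) auto
  qed
  show ?thesis
    unfolding continuous_on_iff J_def[symmetric]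
  proof (intro ballI allI impI)
    fix x e assume x: "x \<in> {a..b}" and e: "(0::real) < e"
    obtain d where d: "d > 0" "\<forall>t\<in>{a..b}. \<forall>t'\<in>{a..b}. t' \<le> t \<longrightarrow> t - t' < d \<longrightarrow> norm (J t - J t') < e"
      using main[OF e] by blast
    have "dist (J x') (J x) < e" if "x' \<in> {a..b}" "dist x' x < d" for x'
    proof (cases "x' \<le> x")
      case True
      have "norm (J x - J x') < e" using d(2) x that True by (auto simp: dist_real_def)
      then show ?thesis by (simp add: dist_norm norm_minus_commute)
    next
      case False then show ?thesis using d(2) x that by (auto simp: dist_norm dist_real_def)
    qed
    then show "\<exists>d>0. \<forall>x'\<in>{a..b}. dist x' x < d \<longrightarrow> dist (J x') (J x) < e" using d(1) by blast
  qed
qed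

end




locale picard = core Em u_m \<sigma> for Em :: "real \<Rightarrow> 'm::banach \<Rightarrow> 'f::banach" and u_m \<sigma> +
  fixes SF :: "real \<Rightarrow> 'f \<Rightarrow> 'f" and P :: "'f \<Rightarrow> real \<Rightarrow> 'm" and f0 :: 'f and t0 c R L :: real
    and el :: "real \<Rightarrow> real"
  assumes c: "t0 \<le> c" and R0: "0 \<le> R" and L: "0 < L"
  and SFc: "continuous_on {t0..c} (\<lambda>t. SF (t - t0) f0)"
  and Plip: "\<And>f f' t t'. norm (f - f0) \<le> R \<Longrightarrow> norm (f' - f0) \<le> R \<Longrightarrow> t \<in> {t0..c} \<Longrightarrow> t' \<in> {t0..c} \<Longrightarrow>
               norm (P f t - P f' t') \<le> L * norm (f - f') + L * \<bar>t - t'\<bar>"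
  and el_cont: "continuous_on {t0..c} el"
  and Pel: "\<And>f t. norm (f - f0) \<le> R \<Longrightarrow> t \<in> {t0..c} \<Longrightarrow> norm (P f t - P f0 t) \<le> el t"
  and Erb: "\<And>t. t \<in> {t0..c} \<Longrightarrow>
     norm (f0 - SF (t - t0) f0 - integral {t0..t} (\<lambda>s. Em (t - s) (P f0 s))) + integral {t0..t} (\<lambda>s. u_m (t - s) * el s) \<le> R"
begin

definition Phi :: "(real \<Rightarrow> 'f) \<Rightarrow> real \<Rightarrow> 'f" where
  "Phi \<phi> t = SF (t - t0) f0 + integral {t0..t} (\<lambda>s. Em (t - s) (P (\<phi> s) s))"

definition good :: "(real \<Rightarrow> 'f) \<Rightarrow> bool" where
  "good \<phi> \<longleftrightarrow> continuous_on {t0..c} \<phi> \<and> (\<forall>t\<in>{t0..c}. norm (\<phi> t - f0) \<le> R)"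

lemma good_const: "good (\<lambda>_. f0)"
  unfolding good_def using R0 by auto

lemma P_cont:
  assumes "good \<phi>"
  shows "continuous_on {t0..c} (\<lambda>s. P (\<phi> s) s)"
  unfolding continuous_on_eq_continuous_within
proof
  fix x assume x: "x \<in> {t0..c}"
  have cphi: "continuous (at x within {t0..c}) \<phi>"
    using assms x unfolding good_def continuous_on_eq_continuous_within by auto
  have "((\<lambda>y. P (\<phi> y) y - P (\<phi> x) x) \<longlongrightarrow> 0) (at x within {t0..c})"
  proof (rule Lim_null_comparison)
    show "eventually (\<lambda>y. norm (P (\<phi> y) y - P (\<phi> x) x) \<le> L * norm (\<phi> y - \<phi> x) + L * \<bar>y - x\<bar>) (at x within {t0..c})"
      unfolding eventually_at_filter
    proof (rule always_eventually, intro allI impI)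
      fix y assume "y \<in> {t0..c}"
      then show "norm (P (\<phi> y) y - P (\<phi> x) x) \<le> L * norm (\<phi> y - \<phi> x) + L * \<bar>y - x\<bar>"
        using assms x unfolding good_def by (intro Plip) auto
    qed
    have "((\<lambda>y. \<phi> y - \<phi> x) \<longlongrightarrow> 0) (at x within {t0..c})"
      using cphi unfolding continuous_within by (simp add: LIM_zero)
    then have "((\<lambda>y. L * norm (\<phi> y - \<phi> x) + L * \<bar>y - x\<bar>) \<longlongrightarrow> L * norm (0::'f) + L * \<bar>x - x\<bar>) (at x within {t0..c})"
      by (intro tendsto_intros)
    then show "((\<lambda>y. L * norm (\<phi> y - \<phi> x) + L * \<bar>y - x\<bar>) \<longlongrightarrow> 0) (at x within {t0..c})" by simp
  qed
  then show "continuous (at x within {t0..c}) (\<lambda>s. P (\<phi> s) s)"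
    unfolding continuous_within by (rule LIM_zero_cancel)
qed

lemma P0_cont: "continuous_on {t0..c} (\<lambda>s. P f0 s)"
  using P_cont[OF good_const] by simp

lemma intPhi:
  assumes "good \<phi>" "t \<in> {t0..c}"
  shows "(\<lambda>s. Em (t - s) (P (\<phi> s) s)) integrable_on {t0..t}"
  by (rule int_vec) (use assms in \<open>auto intro: continuous_on_subset[OF P_cont[OF assms(1)]]\<close>)

lemma Phi_cont:
  assumes "good \<phi>"
  shows "continuous_on {t0..c} (Phi \<phi>)"
  unfolding Phi_def
  by (intro continuous_intros SFc J_cont[OF P_cont[OF assms]])

lemma Phi_ball:
  assumes g: "good \<phi>" and t: "t \<in> {t0..c}"
  shows "norm (Phi \<phi> t - f0) \<le> R"
proof -
  define A where "A = integral {t0..t} (\<lambda>s. Em (t - s) (P (\<phi> s) s))"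
  define B where "B = integral {t0..t} (\<lambda>s. Em (t - s) (P f0 s))"
  have iA: "(\<lambda>s. Em (t - s) (P (\<phi> s) s)) integrable_on {t0..t}" by (rule intPhi[OF g t])
  have iB: "(\<lambda>s. Em (t - s) (P f0 s)) integrable_on {t0..t}" by (rule intPhi[OF good_const t])
  have "Phi \<phi> t - f0 = - (f0 - SF (t - t0) f0 - B) + (A - B)"
    unfolding Phi_def A_def B_def by (simp add: algebra_simps)
  also have "A - B = integral {t0..t} (\<lambda>s. Em (t - s) (P (\<phi> s) s) - Em (t - s) (P f0 s))"
    unfolding A_def B_def by (rule integral_diff[symmetric, OF iA iB])
  also have "norm (- (f0 - SF (t - t0) f0 - B) + \<dots>) \<le> norm (f0 - SF (t - t0) f0 - B) + integral {t0..t} (\<lambda>s. u_m (t - s) * el s)"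
  proof -
    have "norm (integral {t0..t} (\<lambda>s. Em (t - s) (P (\<phi> s) s) - Em (t - s) (P f0 s))) \<le> integral {t0..t} (\<lambda>s. u_m (t - s) * el s)"
    proof (rule nb_interior[OF integrable_diff[OF iA iB] int_real])
      show "continuous_on {t0..t} el" by (rule continuous_on_subset[OF el_cont]) (use t in auto)
      show "t0 \<le> t" using t by auto
      fix s assume s: "s \<in> {t0<..<t}"
      have "Em (t - s) (P (\<phi> s) s) - Em (t - s) (P f0 s) = Em (t - s) (P (\<phi> s) s - P f0 s)"
        using Em_lin[of "t - s"] s by (simp add: linear_diff)
      also have "norm \<dots> \<le> u_m (t - s) * norm (P (\<phi> s) s - P f0 s)" using Em_bd s by auto
      also have "\<dots> \<le> u_m (t - s) * el s"
      proof (rule mult_left_mono)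
        show "norm (P (\<phi> s) s - P f0 s) \<le> el s" using s t g unfolding good_def by (intro Pel) auto
        show "0 \<le> u_m (t - s)" using um_pos[of "t - s"] s by auto
      qed
      finally show "norm (Em (t - s) (P (\<phi> s) s) - Em (t - s) (P f0 s)) \<le> u_m (t - s) * el s" .
    qed
    moreover have "norm (- (f0 - SF (t - t0) f0 - B) + integral {t0..t} (\<lambda>s. Em (t - s) (P (\<phi> s) s) - Em (t - s) (P f0 s)))
       \<le> norm (f0 - SF (t - t0) f0 - B) + norm (integral {t0..t} (\<lambda>s. Em (t - s) (P (\<phi> s) s) - Em (t - s) (P f0 s)))"
      by (rule order_trans[OF norm_triangle_ineq]) (simp add: norm_minus_commute)
    ultimately show ?thesis by linarith
  qed
  also have "\<dots> \<le> R" using Erb[OF t] unfolding B_def .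
  finally show ?thesis .
qed

lemma Phi_good: "good \<phi> \<Longrightarrow> good (Phi \<phi>)"
  unfolding good_def[of "Phi \<phi>"] using Phi_cont Phi_ball by auto

lemma Phi_diff:
  assumes g: "good \<phi>" "good \<psi>" and t: "t \<in> {t0..c}"
  shows "norm (Phi \<phi> t - Phi \<psi> t) \<le> L * integral {t0..t} (\<lambda>s. u_m (t - s) * norm (\<phi> s - \<psi> s))"
proof -
  have iA: "(\<lambda>s. Em (t - s) (P (\<phi> s) s)) integrable_on {t0..t}" by (rule intPhi[OF g(1) t])
  have iB: "(\<lambda>s. Em (t - s) (P (\<psi> s) s)) integrable_on {t0..t}" by (rule intPhi[OF g(2) t])
  have cd: "continuous_on {t0..t} (\<lambda>s. norm (\<phi> s - \<psi> s))"
    using g t by (auto simp: good_def intro!: continuous_intros intro: continuous_on_subset)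
  have "Phi \<phi> t - Phi \<psi> t = integral {t0..t} (\<lambda>s. Em (t - s) (P (\<phi> s) s) - Em (t - s) (P (\<psi> s) s))"
    unfolding Phi_def by (simp add: integral_diff[OF iA iB])
  also have "norm \<dots> \<le> integral {t0..t} (\<lambda>s. L * (u_m (t - s) * norm (\<phi> s - \<psi> s)))"
  proof (rule nb_interior[OF integrable_diff[OF iA iB]])
    show "(\<lambda>s. L * (u_m (t - s) * norm (\<phi> s - \<psi> s))) integrable_on {t0..t}"
      using int_real[OF cd] t by (auto intro: integrable_on_mult_right)
    fix s assume s: "s \<in> {t0<..<t}"
    have "Em (t - s) (P (\<phi> s) s) - Em (t - s) (P (\<psi> s) s) = Em (t - s) (P (\<phi> s) s - P (\<psi> s) s)"
      using Em_lin[of "t - s"] s by (simp add: linear_diff)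
    also have "norm \<dots> \<le> u_m (t - s) * norm (P (\<phi> s) s - P (\<psi> s) s)" using Em_bd s by auto
    also have "\<dots> \<le> u_m (t - s) * (L * norm (\<phi> s - \<psi> s) + L * \<bar>s - s\<bar>)"
    proof (rule mult_left_mono)
      show "norm (P (\<phi> s) s - P (\<psi> s) s) \<le> L * norm (\<phi> s - \<psi> s) + L * \<bar>s - s\<bar>"
        using s t g unfolding good_def by (intro Plip) auto
      show "0 \<le> u_m (t - s)" using um_pos[of "t - s"] s by auto
    qed
    finally show "norm (Em (t - s) (P (\<phi> s) s) - Em (t - s) (P (\<psi> s) s)) \<le> L * (u_m (t - s) * norm (\<phi> s - \<psi> s))"
      by (simp add: algebra_simps)
  qed
  also have "\<dots> = L * integral {t0..t} (\<lambda>s. u_m (t - s) * norm (\<phi> s - \<psi> s))" by simp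
  finally show ?thesis .
qed

end




context picard begin

lemma weight:
  obtains lam where "lam > 0"
    "\<And>t. t \<in> {t0..c} \<Longrightarrow> L * integral {t0..t} (\<lambda>s. u_m (t - s) * exp (lam * (s - t0))) \<le> exp (lam * (t - t0)) / 2"
proof -
  define H where "H = c - t0"
  have H: "H \<ge> 0" using c unfolding H_def by simp
  obtain K where K: "K > 0" "\<forall>\<tau>. 0 < \<tau> \<longrightarrow> \<tau> \<le> H + 1 \<longrightarrow> u_m \<tau> \<le> K * \<tau> powr (\<sigma> - 1)"
    using um_O[of "H + 1"] H by auto
  have Kb: "u_m (t - s) \<le> K * (t - s) powr (\<sigma> - 1)" if "t \<in> {t0..c}" "s \<in> {t0..<t}" for t s
    using K(2) that unfolding H_def by auto
  define \<delta> where "\<delta> = (\<sigma> / (4 * L * K)) powr (1 / \<sigma>)"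
  have \<delta>: "\<delta> > 0" unfolding \<delta>_def using s0 L K by simp
  have \<delta>s: "\<delta> powr \<sigma> = \<sigma> / (4 * L * K)" unfolding \<delta>_def using s0 L K by (simp add: powr_powr)
  define X where "X = L * K * \<delta> powr (\<sigma> - 1) * (H + 1)"
  have X: "X > 0" unfolding X_def using L K \<delta> H by (simp add: add_pos_nonneg)
  define A where "A = 4 * X"
  have A: "A > 0" unfolding A_def using X by simp
  define lam where "lam = \<bar>ln A\<bar> / \<delta> + 1"
  have "0 \<le> \<bar>ln A\<bar> / \<delta>" using \<delta> by simp
  then have lam: "lam > 0" unfolding lam_def by linarith
  have "lam * \<delta> \<ge> ln A" unfolding lam_def using \<delta> by (simp add: distrib_right)
  then have "exp (- (lam * \<delta>)) \<le> exp (- ln A)" by simp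
  also have "\<dots> = 1 / A" using A by (simp add: exp_minus inverse_eq_divide)
  finally have ex: "exp (- (lam * \<delta>)) \<le> 1 / A" .
  have part1: "L * K * \<delta> powr (\<sigma> - 1) * (H + 1) * exp (- (lam * \<delta>)) \<le> 1 / 4"
  proof -
    have "L * K * \<delta> powr (\<sigma> - 1) * (H + 1) * exp (- (lam * \<delta>)) \<le> L * K * \<delta> powr (\<sigma> - 1) * (H + 1) * (1 / A)"
      using ex L K H by (intro mult_left_mono) auto
    also have "\<dots> = X * (1 / (4 * X))" unfolding A_def X_def by simp
    also have "\<dots> = 1 / 4" using X by simp
    finally show ?thesis .
  qed
  have part2: "L * K * \<delta> powr \<sigma> / \<sigma> = 1 / 4" using \<delta>s s0 L K by (simp add: field_simps)
  show ?thesis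
  proof (rule that[OF lam])
    fix t assume t: "t \<in> {t0..c}"
    define E where "E = exp (lam * (t - t0))"
    have E: "E > 0" unfolding E_def by simp
    define f where "f s = u_m (t - s) * exp (lam * (s - t0))" for s
    have fint: "f integrable_on {t0..t}" unfolding f_def
      by (rule int_real) (use t in \<open>auto intro!: continuous_intros\<close>)
    have near: "integral {a..t} f \<le> E * K * (t - a) powr \<sigma> / \<sigma>" if a: "t0 \<le> a" "a \<le> t" for a
    proof -
      have "integral {a..t} f \<le> E * K * (((t - a) powr \<sigma> - (t - t) powr \<sigma>) / \<sigma>)"
      proof (rule le_any)
        show "((\<lambda>s. E * K * (t - s) powr (\<sigma> - 1)) has_integral E * K * (((t - a) powr \<sigma> - (t - t) powr \<sigma>) / \<sigma>)) {a..t}"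
          by (rule has_integral_mult_right, rule pow_int_right[OF s0]) (use a in auto)
        show "0 \<le> E * K * (((t - a) powr \<sigma> - (t - t) powr \<sigma>) / \<sigma>)" using E K s0 by simp
        fix s assume s: "s \<in> {a<..<t}"
        have "f s \<le> (K * (t - s) powr (\<sigma> - 1)) * E"
          unfolding f_def E_def
        proof (rule mult_mono)
          show "u_m (t - s) \<le> K * (t - s) powr (\<sigma> - 1)" using Kb[OF t, of s] s a by auto
          show "exp (lam * (s - t0)) \<le> exp (lam * (t - t0))" using s lam by auto
        qed (use K in auto)
        then show "f s \<le> E * K * (t - s) powr (\<sigma> - 1)" by (simp add: algebra_simps)
      qed
      then show ?thesis using s0 by simp
    qed
    show "L * integral {t0..t} f \<le> E / 2"
    proof (cases "t - t0 \<le> \<delta>")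
      case True
      have "L * integral {t0..t} f \<le> L * (E * K * (t - t0) powr \<sigma> / \<sigma>)"
        using near[of t0] t L by (intro mult_left_mono) auto
      also have "\<dots> \<le> L * (E * K * \<delta> powr \<sigma> / \<sigma>)"
        using True t L E K s0 by (intro mult_left_mono divide_right_mono powr_mono2) auto
      also have "\<dots> = E * (L * K * \<delta> powr \<sigma> / \<sigma>)" by simp
      also have "\<dots> = E / 4" unfolding part2 by simp
      finally show ?thesis using E by simp
    next
      case False
      define m where "m = t - \<delta>"
      have m: "t0 < m" "m < t" using False \<delta> unfolding m_def by auto
      have "integral {t0..t} f = integral {t0..m} f + integral {m..t} f"
        using Henstock_Kurzweil_Integration.integral_combine[where a=t0 and c=m and b=t and f=f] fint m by auto
      also have "integral {t0..m} f \<le> (m - t0) * (K * \<delta> powr (\<sigma> - 1) * (E * exp (- (lam * \<delta>))))"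
      proof (rule le_any)
        show "((\<lambda>s. K * \<delta> powr (\<sigma> - 1) * (E * exp (- (lam * \<delta>)))) has_integral (m - t0) * (K * \<delta> powr (\<sigma> - 1) * (E * exp (- (lam * \<delta>))))) {t0..m}"
          using has_integral_const_real[of "K * \<delta> powr (\<sigma> - 1) * (E * exp (- (lam * \<delta>)))" t0 m] m by simp
        show "0 \<le> (m - t0) * (K * \<delta> powr (\<sigma> - 1) * (E * exp (- (lam * \<delta>))))" using m K E by simp
        fix s assume s: "s \<in> {t0<..<m}"
        show "f s \<le> K * \<delta> powr (\<sigma> - 1) * (E * exp (- (lam * \<delta>)))"
          unfolding f_def
        proof (rule mult_mono)
          have "u_m (t - s) \<le> K * (t - s) powr (\<sigma> - 1)" using Kb[OF t, of s] s m by auto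
          also have "\<dots> \<le> K * \<delta> powr (\<sigma> - 1)"
            using s m s1 K \<delta> unfolding m_def by (intro mult_left_mono powr_mono2') auto
          finally show "u_m (t - s) \<le> K * \<delta> powr (\<sigma> - 1)" .
          have "exp (lam * (s - t0)) \<le> exp (lam * (m - t0))" using s lam by auto
          also have "exp (lam * (m - t0)) = E * exp (- (lam * \<delta>))"
            unfolding E_def m_def by (simp add: exp_add[symmetric] algebra_simps)
          finally show "exp (lam * (s - t0)) \<le> E * exp (- (lam * \<delta>))" .
        qed (use K \<delta> in auto)
      qed
      also have "integral {m..t} f \<le> E * K * (t - m) powr \<sigma> / \<sigma>" using near[of m] m by auto
      finally have "L * integral {t0..t} f \<le> L * ((m - t0) * (K * \<delta> powr (\<sigma> - 1) * (E * exp (- (lam * \<delta>)))) + E * K * (t - m) powr \<sigma> / \<sigma>)"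
        using L by (intro mult_left_mono) auto
      also have "\<dots> = E * ((m - t0) * (L * K * \<delta> powr (\<sigma> - 1) * exp (- (lam * \<delta>)))) + E * (L * K * \<delta> powr \<sigma> / \<sigma>)"
        unfolding m_def by (simp add: algebra_simps)
      also have "\<dots> \<le> E * ((H + 1) * (L * K * \<delta> powr (\<sigma> - 1) * exp (- (lam * \<delta>)))) + E * (L * K * \<delta> powr \<sigma> / \<sigma>)"
        using E m t L K unfolding H_def by (intro add_right_mono mult_left_mono mult_right_mono) auto
      also have "\<dots> \<le> E * (1/4) + E * (1/4)"
        using part1 part2 E by (intro add_mono mult_left_mono) (auto simp: algebra_simps)
      finally show ?thesis by simp
    qed
  qed
qed

lemma contr:
  assumes lam: "\<And>t. t \<in> {t0..c} \<Longrightarrow> L * integral {t0..t} (\<lambda>s. u_m (t - s) * exp (lam * (s - t0))) \<le> exp (lam * (t - t0)) / 2"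
    and g: "good \<phi>" "good \<psi>" and D: "D \<ge> 0"
    and b: "\<And>s. s \<in> {t0..c} \<Longrightarrow> norm (\<phi> s - \<psi> s) \<le> D * exp (lam * (s - t0))"
    and t: "t \<in> {t0..c}"
  shows "norm (Phi \<phi> t - Phi \<psi> t) \<le> D / 2 * exp (lam * (t - t0))"
proof -
  have "norm (Phi \<phi> t - Phi \<psi> t) \<le> L * integral {t0..t} (\<lambda>s. u_m (t - s) * norm (\<phi> s - \<psi> s))"
    by (rule Phi_diff[OF g t])
  also have "integral {t0..t} (\<lambda>s. u_m (t - s) * norm (\<phi> s - \<psi> s)) \<le> integral {t0..t} (\<lambda>s. u_m (t - s) * (D * exp (lam * (s - t0))))"
  proof (rule le_interior)
    show "(\<lambda>s. u_m (t - s) * norm (\<phi> s - \<psi> s)) integrable_on {t0..t}"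
      by (rule int_real) (use g t in \<open>auto simp: good_def intro!: continuous_intros intro: continuous_on_subset\<close>)
    show "(\<lambda>s. u_m (t - s) * (D * exp (lam * (s - t0)))) integrable_on {t0..t}"
      by (rule int_real) (use t in \<open>auto intro!: continuous_intros\<close>)
    fix s assume s: "s \<in> {t0<..<t}"
    show "u_m (t - s) * norm (\<phi> s - \<psi> s) \<le> u_m (t - s) * (D * exp (lam * (s - t0)))"
      using b[of s] s t um_pos[of "t - s"] by (intro mult_left_mono) auto
  qed
  then have "L * integral {t0..t} (\<lambda>s. u_m (t - s) * norm (\<phi> s - \<psi> s)) \<le> L * integral {t0..t} (\<lambda>s. D * (u_m (t - s) * exp (lam * (s - t0))))"
    using L by (simp add: algebra_simps)
  also have "\<dots> = D * (L * integral {t0..t} (\<lambda>s. u_m (t - s) * exp (lam * (s - t0))))" by simp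
  also have "\<dots> \<le> D * (exp (lam * (t - t0)) / 2)" using lam[OF t] D by (intro mult_left_mono) auto
  finally show ?thesis by simp
qed

end




context picard begin

lemma exp_ge1: "s \<ge> t0 \<Longrightarrow> lam \<ge> 0 \<Longrightarrow> 1 \<le> exp (lam * (s - t0))"
  by simp

lemma aux_le: "0 \<le> (a::real) \<Longrightarrow> 1 \<le> x \<Longrightarrow> a \<le> a * x"
  using mult_left_mono[of 1 x a] by simp

lemma exist: "\<exists>\<phi>. good \<phi> \<and> (\<forall>t\<in>{t0..c}. Phi \<phi> t = \<phi> t)"
proof -
  obtain lam where lam: "lam > 0"
    and W: "\<And>t. t \<in> {t0..c} \<Longrightarrow> L * integral {t0..t} (\<lambda>s. u_m (t - s) * exp (lam * (s - t0))) \<le> exp (lam * (t - t0)) / 2"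
    using weight by blast
  define it where "it n = (Phi ^^ n) (\<lambda>_. f0)" for n
  have itS: "it (Suc n) = Phi (it n)" for n by (simp add: it_def)
  have itg: "good (it n)" for n by (induct n) (auto simp: it_def good_const Phi_good)
  have dif: "\<forall>s\<in>{t0..c}. norm (it (Suc n) s - it n s) \<le> (2 * R / 2 ^ n) * exp (lam * (s - t0))" for n
  proof (induct n)
    case 0
    show ?case
    proof
      fix s assume s: "s \<in> {t0..c}"
      have "norm (it (Suc 0) s - it 0 s) \<le> R" using Phi_ball[OF good_const s] by (simp add: it_def)
      also have "\<dots> \<le> 2 * R" using R0 by simp
      also have "\<dots> \<le> 2 * R * exp (lam * (s - t0))"
        using R0 exp_ge1[of s lam] s lam by (intro aux_le) auto
      finally show "norm (it (Suc 0) s - it 0 s) \<le> (2 * R / 2 ^ 0) * exp (lam * (s - t0))" by simp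
    qed
  next
    case (Suc n)
    show ?case
    proof
      fix t assume t: "t \<in> {t0..c}"
      have "norm (Phi (it (Suc n)) t - Phi (it n) t) \<le> (2 * R / 2 ^ n) / 2 * exp (lam * (t - t0))"
        by (rule contr[OF W itg itg _ _ t]) (use Suc R0 in auto)
      then show "norm (it (Suc (Suc n)) t - it (Suc n) t) \<le> (2 * R / 2 ^ Suc n) * exp (lam * (t - t0))"
        by (simp add: itS)
    qed
  qed
  define M where "M n = (2 * R * exp (lam * (c - t0))) * (1 / 2) ^ n" for n
  have sM: "summable M" unfolding M_def by (intro summable_mult summable_geometric) simp
  have dM: "norm (it (Suc n) s - it n s) \<le> M n" if s: "s \<in> {t0..c}" for n s
  proof -
    have "norm (it (Suc n) s - it n s) \<le> (2 * R / 2 ^ n) * exp (lam * (s - t0))" using dif s by blast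
    also have "\<dots> \<le> (2 * R / 2 ^ n) * exp (lam * (c - t0))"
      using s lam R0 by (intro mult_left_mono) auto
    also have "\<dots> = M n" unfolding M_def by (simp add: power_one_over)
    finally show ?thesis .
  qed
  have ul: "uniform_limit {t0..c} (\<lambda>n s. \<Sum>i<n. it (Suc i) s - it i s) (\<lambda>s. \<Sum>i. it (Suc i) s - it i s) sequentially"
    by (rule Weierstrass_m_test[OF dM sM])
  define \<phi> where "\<phi> s = f0 + (\<Sum>i. it (Suc i) s - it i s)" for s
  have ul2: "uniform_limit {t0..c} it \<phi> sequentially"
  proof (rule uniform_limitI)
    fix e :: real assume e: "e > 0"
    show "\<forall>\<^sub>F n in sequentially. \<forall>x\<in>{t0..c}. dist (it n x) (\<phi> x) < e"
      using uniform_limitD[OF ul e]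
    proof eventually_elim
      case (elim n)
      show ?case
      proof
        fix x assume x: "x \<in> {t0..c}"
        have "(\<Sum>i<n. it (Suc i) x - it i x) = it n x - f0"
          by (subst sum_lessThan_telescope) (simp add: it_def)
        then have e1: "it n x = f0 + (\<Sum>i<n. it (Suc i) x - it i x)" by (simp add: algebra_simps)
        have "it n x - \<phi> x = (\<Sum>i<n. it (Suc i) x - it i x) - (\<Sum>i. it (Suc i) x - it i x)"
          unfolding \<phi>_def by (subst e1) simp
        then have "dist (it n x) (\<phi> x) = dist (\<Sum>i<n. it (Suc i) x - it i x) (\<Sum>i. it (Suc i) x - it i x)"
          unfolding dist_norm by simp
        then show "dist (it n x) (\<phi> x) < e" using elim x by auto
      qed
    qed
  qed
  have cphi: "continuous_on {t0..c} \<phi>"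
    by (rule uniform_limit_theorem[OF _ ul2]) (use itg in \<open>auto simp: good_def\<close>)
  have bphi: "norm (\<phi> t - f0) \<le> R" if t: "t \<in> {t0..c}" for t
  proof (rule Lim_norm_ubound[of sequentially "\<lambda>n. it n t - f0"])
    show "(\<lambda>n. it n t - f0) \<longlonglongrightarrow> \<phi> t - f0"
      by (intro tendsto_intros tendsto_uniform_limitI[OF ul2 t])
    show "\<forall>\<^sub>F n in sequentially. norm (it n t - f0) \<le> R"
      using itg t by (auto simp: good_def)
  qed simp
  have gphi: "good \<phi>" unfolding good_def using cphi bphi by auto
  have fixp: "Phi \<phi> t = \<phi> t" if t: "t \<in> {t0..c}" for t
  proof -
    define A where "A = exp (lam * (c - t0)) / 2 + 1"
    have A: "A > 0" unfolding A_def by (simp add: add_pos_nonneg)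
    have eps: "norm (Phi \<phi> t - \<phi> t) \<le> e * A" if e: "e > 0" for e
    proof -
      obtain N where N: "\<And>n x. n \<ge> N \<Longrightarrow> x \<in> {t0..c} \<Longrightarrow> dist (it n x) (\<phi> x) < e"
        using uniform_limitD[OF ul2 e] unfolding eventually_sequentially by blast
      have b: "norm (\<phi> s - it N s) \<le> e * exp (lam * (s - t0))" if s: "s \<in> {t0..c}" for s
      proof -
        have "norm (\<phi> s - it N s) \<le> e" using N[of N s] s by (simp add: dist_norm norm_minus_commute)
        also have "\<dots> \<le> e * exp (lam * (s - t0))" using e exp_ge1[of s lam] s lam by (intro aux_le) auto
        finally show ?thesis .
      qed
      have "norm (Phi \<phi> t - Phi (it N) t) \<le> e / 2 * exp (lam * (t - t0))"
        by (rule contr[OF W gphi itg _ b t]) (use e in auto)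
      also have "\<dots> \<le> e / 2 * exp (lam * (c - t0))" using t e lam by (intro mult_left_mono) auto
      finally have 1: "norm (Phi \<phi> t - it (Suc N) t) \<le> e / 2 * exp (lam * (c - t0))" by (simp add: itS)
      have 2: "norm (it (Suc N) t - \<phi> t) \<le> e" using N[of "Suc N" t] t by (simp add: dist_norm)
      have "norm (Phi \<phi> t - \<phi> t) \<le> norm (Phi \<phi> t - it (Suc N) t) + norm (it (Suc N) t - \<phi> t)"
        using norm_triangle_ineq[of "Phi \<phi> t - it (Suc N) t" "it (Suc N) t - \<phi> t"] by simp
      also have "\<dots> \<le> e / 2 * exp (lam * (c - t0)) + e" using 1 2 by simp
      also have "\<dots> = e * A" unfolding A_def by (simp add: algebra_simps)
      finally show ?thesis .
    qed
    show ?thesis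
    proof (rule ccontr)
      assume "Phi \<phi> t \<noteq> \<phi> t"
      then have pos: "norm (Phi \<phi> t - \<phi> t) > 0" by simp
      have "norm (Phi \<phi> t - \<phi> t) \<le> norm (Phi \<phi> t - \<phi> t) / (2 * A) * A"
        by (rule eps) (use pos A in simp)
      also have "\<dots> = norm (Phi \<phi> t - \<phi> t) / 2" using A by simp
      finally show False using pos by simp
    qed
  qed
  show ?thesis using gphi fixp by blast
qed

lemma uniq:
  assumes g: "good \<phi>" "good \<psi>" and f: "\<And>t. t \<in> {t0..c} \<Longrightarrow> Phi \<phi> t = \<phi> t" "\<And>t. t \<in> {t0..c} \<Longrightarrow> Phi \<psi> t = \<psi> t"
    and t: "t \<in> {t0..c}"
  shows "\<phi> t = \<psi> t"
proof -
  obtain lam where lam: "lam > 0"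
    and W: "\<And>t. t \<in> {t0..c} \<Longrightarrow> L * integral {t0..t} (\<lambda>s. u_m (t - s) * exp (lam * (s - t0))) \<le> exp (lam * (t - t0)) / 2"
    using weight by blast
  have dif: "\<forall>s\<in>{t0..c}. norm (\<phi> s - \<psi> s) \<le> (2 * R / 2 ^ n) * exp (lam * (s - t0))" for n
  proof (induct n)
    case 0
    show ?case
    proof
      fix s assume s: "s \<in> {t0..c}"
      have "norm (\<phi> s - \<psi> s) \<le> norm (\<phi> s - f0) + norm (\<psi> s - f0)"
        using norm_triangle_ineq4[of "\<phi> s - f0" "\<psi> s - f0"] by simp
      also have "\<dots> \<le> 2 * R" using g s by (auto simp: good_def intro: add_mono[of _ R _ R, simplified])
      also have "\<dots> \<le> 2 * R * exp (lam * (s - t0))"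
        using R0 exp_ge1[of s lam] s lam by (intro aux_le) auto
      finally show "norm (\<phi> s - \<psi> s) \<le> (2 * R / 2 ^ 0) * exp (lam * (s - t0))" by simp
    qed
  next
    case (Suc n)
    show ?case
    proof
      fix s assume s: "s \<in> {t0..c}"
      have "norm (Phi \<phi> s - Phi \<psi> s) \<le> (2 * R / 2 ^ n) / 2 * exp (lam * (s - t0))"
        by (rule contr[OF W g _ _ s]) (use Suc R0 in auto)
      then show "norm (\<phi> s - \<psi> s) \<le> (2 * R / 2 ^ Suc n) * exp (lam * (s - t0))"
        using f[OF s] by simp
    qed
  qed
  have "(\<lambda>n. (2 * R * exp (lam * (t - t0))) / 2 ^ n) \<longlonglongrightarrow> 0"
    by (rule LIMSEQ_divide_realpow_zero) simp
  moreover have "\<forall>n. norm (\<phi> t - \<psi> t) \<le> (2 * R * exp (lam * (t - t0))) / 2 ^ n"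
    using dif t by simp
  ultimately have "norm (\<phi> t - \<psi> t) \<le> 0"
    by (intro LIMSEQ_le_const) auto
  then show ?thesis by simp
qed

end




lemma bounded_on':
  fixes g :: "real \<Rightarrow> 'c::real_normed_vector"
  assumes "continuous_on {a..b} g"
  obtains G where "G \<ge> 0" "\<And>x. x \<in> {a..b} \<Longrightarrow> norm (g x) \<le> G"
proof -
  have "bounded (g ` {a..b})"
    by (rule compact_imp_bounded[OF compact_continuous_image[OF assms compact_Icc]])
  then obtain B where "\<forall>x\<in>g ` {a..b}. norm x \<le> B" by (auto simp: bounded_iff)
  then have "\<And>x. x \<in> {a..b} \<Longrightarrow> norm (g x) \<le> max B 0" by (metis image_eqI max.coboundedI1)
  then show ?thesis using that[of "max B 0"] by auto
qed

lemma um_O_lemma: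
  fixes u_m :: "real \<Rightarrow> real"
  assumes cu: "continuous_on {0<..} u_m" and s1: "\<sigma> \<le> 1"
    and O: "u_m \<in> O[at_right 0](\<lambda>t. t powr (\<sigma> - 1))" and H: "H > 0"
  shows "\<exists>K>0. \<forall>\<tau>. 0 < \<tau> \<longrightarrow> \<tau> \<le> H \<longrightarrow> u_m \<tau> \<le> K * \<tau> powr (\<sigma> - 1)"
proof -
  obtain c where c: "c > 0" "eventually (\<lambda>x. norm (u_m x) \<le> c * norm (x powr (\<sigma> - 1))) (at_right 0)"
    using landau_o.bigE[OF O] by blast
  then obtain b where b: "b > 0" "\<And>y. y > 0 \<Longrightarrow> y < b \<Longrightarrow> norm (u_m y) \<le> c * norm (y powr (\<sigma> - 1))"
    unfolding eventually_at_right_field by auto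
  define e where "e = min (b / 2) H"
  have e: "e > 0" "e \<le> H" "e < b" unfolding e_def using b H by auto
  have "continuous_on {e..H} u_m" by (rule continuous_on_subset[OF cu]) (use e in auto)
  then obtain B where B: "B \<ge> 0" "\<And>x. x \<in> {e..H} \<Longrightarrow> norm (u_m x) \<le> B" using bounded_on' by blast
  have Hp: "H powr (\<sigma> - 1) > 0" using H by simp
  define K where "K = max c (B / H powr (\<sigma> - 1))"
  have K: "K > 0" unfolding K_def using c by simp
  have "u_m \<tau> \<le> K * \<tau> powr (\<sigma> - 1)" if \<tau>: "0 < \<tau>" "\<tau> \<le> H" for \<tau>
  proof (cases "\<tau> < e")
    case True
    have "u_m \<tau> \<le> norm (u_m \<tau>)" by simp
    also have "\<dots> \<le> c * norm (\<tau> powr (\<sigma> - 1))" using b(2)[of \<tau>] True e \<tau> by auto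
    also have "\<dots> = c * \<tau> powr (\<sigma> - 1)" by simp
    also have "\<dots> \<le> K * \<tau> powr (\<sigma> - 1)" unfolding K_def by (intro mult_right_mono) auto
    finally show ?thesis .
  next
    case False
    have "u_m \<tau> \<le> norm (u_m \<tau>)" by simp
    also have "\<dots> \<le> B" using B(2)[of \<tau>] False \<tau> by auto
    also have "\<dots> = (B / H powr (\<sigma> - 1)) * H powr (\<sigma> - 1)" using Hp by simp
    also have "\<dots> \<le> (B / H powr (\<sigma> - 1)) * \<tau> powr (\<sigma> - 1)"
      using B Hp \<tau> s1 by (intro mult_left_mono powr_mono2') auto
    also have "\<dots> \<le> K * \<tau> powr (\<sigma> - 1)" unfolding K_def by (intro mult_right_mono) auto
    finally show ?thesis .
  qed
  then show ?thesis using K by blast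
qed

lemma Em_linear:
  assumes "bounded_linear iF" "inj iF" "linear St" "\<And>g. iF (Em g) = St g"
  shows "linear Em"
proof (rule linearI)
  interpret iF: bounded_linear iF by fact
  fix x y
  have "iF (Em (x + y)) = iF (Em x + Em y)" using assms(3,4) by (simp add: iF.add linear_add)
  then show "Em (x + y) = Em x + Em y" using assms(2) by (simp add: inj_eq)
  fix r :: real
  have "iF (Em (r *\<^sub>R x)) = iF (r *\<^sub>R Em x)" using assms(3,4) by (simp add: iF.scaleR linear_scale)
  then show "Em (r *\<^sub>R x) = r *\<^sub>R Em x" using assms(2) by (simp add: inj_eq)
qed

context picard begin

lemma exist': "\<exists>\<phi>. continuous_on {t0..c} \<phi> \<and> (\<forall>t\<in>{t0..c}. norm (\<phi> t - f0) \<le> R) \<and>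
   (\<forall>t\<in>{t0..c}. (\<lambda>s. Em (t - s) (P (\<phi> s) s)) integrable_on {t0..t} \<and>
        SF (t - t0) f0 + integral {t0..t} (\<lambda>s. Em (t - s) (P (\<phi> s) s)) = \<phi> t)"
proof -
  obtain \<phi> where "good \<phi>" "\<forall>t\<in>{t0..c}. Phi \<phi> t = \<phi> t" using exist by blast
  then show ?thesis using intPhi unfolding good_def Phi_def by blast
qed

lemma uniq':
  assumes "continuous_on {t0..c} \<phi>" "\<forall>t\<in>{t0..c}. norm (\<phi> t - f0) \<le> R"
   "\<forall>t\<in>{t0..c}. SF (t - t0) f0 + integral {t0..t} (\<lambda>s. Em (t - s) (P (\<phi> s) s)) = \<phi> t"
   "continuous_on {t0..c} \<psi>" "\<forall>t\<in>{t0..c}. norm (\<psi> t - f0) \<le> R"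
   "\<forall>t\<in>{t0..c}. SF (t - t0) f0 + integral {t0..t} (\<lambda>s. Em (t - s) (P (\<psi> s) s)) = \<psi> t"
   "t \<in> {t0..c}"
  shows "\<phi> t = \<psi> t"
  by (rule uniq) (use assms in \<open>auto simp: good_def Phi_def\<close>)

end




lemma Ico_e_real: "Ico_e a (ereal b) = {a..<b}" by (auto simp: Ico_e_def)
lemma ball_e_real: "ball_e x (ereal r) = ball x r" by (auto simp: ball_e_def dist_commute)

lemma ereal_le_less: "x \<le> y \<Longrightarrow> ereal y < T \<Longrightarrow> ereal x < T"
  by (metis ereal_less_eq(3) le_less_trans)

lemma ereal_pos_real: "0 < (r::ereal) \<Longrightarrow> \<exists>\<rho>. 0 < \<rho> \<and> ereal \<rho> < r"
  using ereal_dense2[of 0 r] by (auto simp: zero_ereal_def)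

lemma SF_cont_comp:
  fixes SF :: "real \<Rightarrow> 'f::topological_space \<Rightarrow> 'g::topological_space"
  assumes "continuous_on (UNIV \<times> {0..}) (\<lambda>(f, t). SF t f)" "\<And>t. t \<in> A \<Longrightarrow> t0 \<le> t"
  shows "continuous_on A (\<lambda>t. SF (t - t0) f0)"
proof -
  have "continuous_on A (\<lambda>t. (\<lambda>(f, t). SF t f) (f0, t - t0))"
  proof (rule continuous_on_compose2[OF assms(1)])
    show "continuous_on A (\<lambda>t. (f0, t - t0))" by (intro continuous_intros)
    show "(\<lambda>t. (f0, t - t0)) ` A \<subseteq> UNIV \<times> {0..}" using assms(2) by auto
  qed
  then show ?thesis by simp
qed

theorem proposition3p10:
  fixes iP :: "'p::banach \<Rightarrow> 'f::banach"
    and iF :: "'f \<Rightarrow> 'm::banach"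
    and A :: "'p \<Rightarrow> 'm"
    and S :: "real \<Rightarrow> 'm \<Rightarrow> 'm"
    and SF :: "real \<Rightarrow> 'f \<Rightarrow> 'f"
    and Em :: "real \<Rightarrow> 'm \<Rightarrow> 'f"
    and u u_m :: "real \<Rightarrow> real"
    and \<sigma> :: real
    and P :: "'f \<Rightarrow> real \<Rightarrow> 'm"
    and D :: "('f \<times> real) set"
    and f0 :: 'f and t0 :: real
  assumes P1: "dense_embedding iP" "dense_embedding iF"
    and P2: "linear A"
      "\<exists>c C. 0 < c \<and> 0 < C \<and> (\<forall>p. c * norm p \<le> norm (iF (iP p)) + norm (A p)
                                  \<and> norm (iF (iP p)) + norm (A p) \<le> C * norm p)"
    and P3: "generates S (iF \<circ> iP) A"
    and P4: "\<forall>t\<ge>0. \<forall>f. iF (SF t f) = S t (iF f)"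
      "continuous_on (UNIV \<times> {0..}) (\<lambda>(f, t). SF t f)"
      "continuous_on {0..} u" "\<forall>t\<ge>0. 0 < u t"
      "\<forall>t\<ge>0. \<forall>f. norm (SF t f) \<le> u t * norm f"
    and P5: "\<forall>t>0. \<forall>g. iF (Em t g) = S t g"
      "continuous_on (UNIV \<times> {0<..}) (\<lambda>(g, t). Em t g)"
      "continuous_on {0<..} u_m" "\<forall>t>0. 0 < u_m t"
      "\<forall>t>0. \<forall>g. norm (Em t g) \<le> u_m t * norm g"
      "0 < \<sigma>" "\<sigma> \<le> 1"
      "u_m \<in> O[at_right 0](\<lambda>t. t powr (\<sigma> - 1))"
    and P6: "\<forall>(g, s)\<in>D. \<exists>\<delta> r::ereal. 0 < \<delta> \<and> 0 < r \<and>
                 ball_e g r \<times> Ico_e s (ereal s + \<delta>) \<subseteq> D"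
      "\<forall>C. closed C \<and> bounded C \<and> C \<subseteq> D \<longrightarrow>
          (\<exists>L M. 0 \<le> L \<and> 0 \<le> M \<and> (\<forall>(f, t)\<in>C. \<forall>(f', t')\<in>C.
              norm (P f t - P f' t') \<le> L * norm (f - f') + M * \<bar>t - t'\<bar>))"
    and dom: "(f0, t0) \<in> D"
  shows "(\<exists>R' T' Er ell. local_data SF Em P D f0 t0 R' T' Er ell) \<and>
    (\<forall>R' T' Er ell. local_data SF Em P D f0 t0 R' T' Er ell \<longrightarrow>
       (\<exists>R T. 0 < R \<and> ereal R < R' \<and> ereal t0 < T \<and> T \<le> T' \<and>
          (\<forall>t\<in>Ico_e t0 T. Er t + integral {t0..t} (\<lambda>s. u_m (t - s) * ell R s) \<le> R)) \<and>
       (\<forall>R T. 0 < R \<and> ereal R < R' \<and> ereal t0 < T \<and> T \<le> T' \<and>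
          (\<forall>t\<in>Ico_e t0 T. Er t + integral {t0..t} (\<lambda>s. u_m (t - s) * ell R s) \<le> R) \<longrightarrow>
          (\<exists>\<phi>. VP_solution SF Em P D f0 t0 T \<phi> \<and>
               (\<forall>t\<in>Ico_e t0 T. norm (\<phi> t - f0) \<le> R))))"
proof -
  have iFb: "bounded_linear iF" "inj iF" using P1(2) unfolding dense_embedding_def by auto
  have sg: "c0_semigroup S" using P3 unfolding generates_def by auto
  have Slin: "\<And>t. t \<ge> 0 \<Longrightarrow> bounded_linear (S t)" and S0: "S 0 = id"
    using sg unfolding c0_semigroup_def by auto
  have SF0: "SF 0 f = f" for f
  proof -
    have "iF (SF 0 f) = iF f" using P4(1) S0 by simp
    then show ?thesis using iFb(2) by (simp add: inj_eq)
  qed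
  have umO: "\<And>H. H > 0 \<Longrightarrow> \<exists>K>0. \<forall>\<tau>. 0 < \<tau> \<longrightarrow> \<tau> \<le> H \<longrightarrow> u_m \<tau> \<le> K * \<tau> powr (\<sigma> - 1)"
    using um_O_lemma[OF P5(3) P5(7) P5(8)] by blast
  have Emlin: "linear (Em t)" if t: "t > 0" for t
    by (rule Em_linear[OF iFb, of "S t"]) (use Slin[of t] t P5(1) in \<open>auto simp: bounded_linear.linear\<close>)
  have cr: "core Em u_m \<sigma>"
    unfolding core_def using P5 umO Emlin by auto
  have part1: "\<exists>R' T' Er ell. local_data SF Em P D f0 t0 R' T' Er ell"
  proof -
    obtain \<delta> r :: ereal where \<delta>r: "0 < \<delta>" "0 < r" "ball_e f0 r \<times> Ico_e t0 (ereal t0 + \<delta>) \<subseteq> D"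
      using bspec[OF P6(1) dom] by auto
    obtain \<rho> where \<rho>: "0 < \<rho>" "ereal \<rho> < r" using ereal_pos_real[OF \<delta>r(2)] by blast
    obtain d where d: "0 < d" "ereal d < \<delta>" using ereal_pos_real[OF \<delta>r(1)] by blast
    define C where "C = cball f0 \<rho> \<times> {t0..t0+d}"
    have CD: "C \<subseteq> D"
    proof
      fix x assume "x \<in> C"
      then obtain f t where x: "x = (f, t)" "dist f0 f \<le> \<rho>" "t0 \<le> t" "t \<le> t0 + d" unfolding C_def by auto
      have "ereal (dist f f0) \<le> ereal \<rho>" using x(2) by (simp add: dist_commute)
      then have "ereal (dist f f0) < r" using \<rho>(2) by (rule le_less_trans)
      then have "f \<in> ball_e f0 r" unfolding ball_e_def by auto
      moreover have "t \<in> Ico_e t0 (ereal t0 + \<delta>)" unfolding Ico_e_def using x d by (cases \<delta>) auto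
      ultimately show "x \<in> D" using \<delta>r(3) x(1) by auto
    qed
    have Cc: "closed C" "bounded C" unfolding C_def by (auto intro: closed_Times bounded_Times)
    obtain L0 M0 where LM: "0 \<le> L0" "0 \<le> M0"
      "\<forall>(f, t)\<in>C. \<forall>(f', t')\<in>C. norm (P f t - P f' t') \<le> L0 * norm (f - f') + M0 * \<bar>t - t'\<bar>"
      using P6(2) Cc CD by meson
    have Lip2: "norm (P f t - P f' t') \<le> L0 * norm (f - f') + M0 * \<bar>t - t'\<bar>"
      if "(f, t) \<in> C" "(f', t') \<in> C" for f t f' t'
      using LM(3) that by fastforce
    have Lip: "norm (P f t - P f' t') \<le> L0 * norm (f - f') + M0 * \<bar>t - t'\<bar>"
      if "f \<in> cball f0 \<rho>" "f' \<in> cball f0 \<rho>" "t \<in> {t0..t0+d}" "t' \<in> {t0..t0+d}" for f f' t t'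
      by (rule Lip2) (use that in \<open>auto simp: C_def\<close>)
    define Mb where "Mb = norm (P f0 t0) + M0 * d"
    have Mb: "norm (P f0 s) \<le> Mb" if s: "s \<in> {t0..t0+d}" for s
    proof -
      have "norm (P f0 s - P f0 t0) \<le> L0 * norm (f0 - f0) + M0 * \<bar>s - t0\<bar>" by (rule Lip) (use s \<rho> d in auto)
      also have "\<dots> \<le> M0 * d" using s LM(2) by (auto intro: mult_left_mono)
      finally have "norm (P f0 s - P f0 t0) \<le> M0 * d" .
      then show ?thesis unfolding Mb_def using norm_triangle_sub[of "P f0 s" "P f0 t0"] by linarith
    qed
    have Mb0: "0 \<le> Mb" unfolding Mb_def using LM d by simp
    obtain K where K: "K > 0" "\<forall>\<tau>. 0 < \<tau> \<longrightarrow> \<tau> \<le> d \<longrightarrow> u_m \<tau> \<le> K * \<tau> powr (\<sigma> - 1)"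
      using umO[OF d(1)] by blast
    define Er where "Er t = norm (f0 - SF (t - t0) f0) + K * Mb * (t - t0) powr \<sigma> / \<sigma>" for t
    define ell where "ell r t = L0 * r" for r t :: real
    have c1: "continuous_on {t0..<t0+d} (\<lambda>t. SF (t - t0) f0)" by (rule SF_cont_comp[OF P4(2)]) auto
    have c2: "continuous_on {t0..<t0+d} (\<lambda>t. (t - t0) powr \<sigma>)"
      by (rule continuous_on_powr') (use P5(6) in \<open>auto intro!: continuous_intros\<close>)
    have "local_data SF Em P D f0 t0 (ereal \<rho>) (ereal (t0 + d)) Er ell"
      unfolding local_data_def Ico_e_real ball_e_real
    proof (intro conjI)
      show "0 < ereal \<rho>" using \<rho> by simp
      show "ereal t0 < ereal (t0 + d)" using d by simp
      show "ball f0 \<rho> \<times> {t0..<t0 + d} \<subseteq> D" using CD unfolding C_def by auto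
      have c3: "continuous_on {t0..<t0+d} (\<lambda>t. K * Mb * (t - t0) powr \<sigma> / \<sigma>)"
        by (rule continuous_on_divide[OF continuous_on_mult_left[OF c2] continuous_on_const]) (use P5(6) in auto)
      show "continuous_on {t0..<t0 + d} Er" unfolding Er_def
        by (rule continuous_on_add[OF continuous_on_norm[OF continuous_on_diff[OF continuous_on_const c1]] c3])
      show "\<forall>t\<in>{t0..<t0 + d}. 0 \<le> Er t" unfolding Er_def using K Mb0 P5(6) by auto
      show "Er t0 = 0" unfolding Er_def using SF0 P5(6) by simp
      show "\<forall>t\<in>{t0..<t0 + d}. norm (f0 - SF (t - t0) f0 - integral {t0..t} (\<lambda>s. Em (t - s) (P f0 s))) \<le> Er t"
      proof
        fix t assume t: "t \<in> {t0..<t0 + d}"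
        have I: "norm (integral {t0..t} (\<lambda>s. Em (t - s) (P f0 s))) \<le> K * Mb * (((t - t0) powr \<sigma> - (t - t) powr \<sigma>) / \<sigma>)"
        proof (rule nb_any)
          show "((\<lambda>s. K * Mb * (t - s) powr (\<sigma> - 1)) has_integral K * Mb * (((t - t0) powr \<sigma> - (t - t) powr \<sigma>) / \<sigma>)) {t0..t}"
            by (rule has_integral_mult_right, rule pow_int_right[OF P5(6)]) (use t in auto)
          show "0 \<le> K * Mb * (((t - t0) powr \<sigma> - (t - t) powr \<sigma>) / \<sigma>)" using K Mb0 P5(6) by simp
          fix s assume s: "s \<in> {t0<..<t}"
          have "norm (Em (t - s) (P f0 s)) \<le> u_m (t - s) * norm (P f0 s)" using P5(5) s by auto
          also have "\<dots> \<le> (K * (t - s) powr (\<sigma> - 1)) * Mb"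
          proof (rule mult_mono)
            show "u_m (t - s) \<le> K * (t - s) powr (\<sigma> - 1)" using K(2) s t by auto
            show "norm (P f0 s) \<le> Mb" using Mb[of s] s t by auto
            show "0 \<le> K * (t - s) powr (\<sigma> - 1)" using K by simp
          qed simp
          finally show "norm (Em (t - s) (P f0 s)) \<le> K * Mb * (t - s) powr (\<sigma> - 1)" by (simp add: algebra_simps)
        qed
        have "norm (f0 - SF (t - t0) f0 - integral {t0..t} (\<lambda>s. Em (t - s) (P f0 s)))
            \<le> norm (f0 - SF (t - t0) f0) + norm (integral {t0..t} (\<lambda>s. Em (t - s) (P f0 s)))"
          by (rule norm_triangle_ineq4)
        also have "\<dots> \<le> Er t" unfolding Er_def using I P5(6) by simp
        finally show "norm (f0 - SF (t - t0) f0 - integral {t0..t} (\<lambda>s. Em (t - s) (P f0 s))) \<le> Er t" .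
      qed
      show "continuous_on ({0..<\<rho>} \<times> {t0..<t0 + d}) (\<lambda>(r, t). ell r t)"
        unfolding ell_def by (simp add: case_prod_beta) (intro continuous_intros)
      show "\<forall>r\<in>{0..<\<rho>}. \<forall>t\<in>{t0..<t0 + d}. 0 \<le> ell r t" unfolding ell_def using LM by auto
      show "\<forall>t\<in>{t0..<t0 + d}. mono_on {0..<\<rho>} (\<lambda>r. ell r t)"
        unfolding ell_def using LM by (auto intro!: mono_onI mult_left_mono)
      show "\<forall>f\<in>ball f0 \<rho>. \<forall>t\<in>{t0..<t0 + d}. norm (P f t - P f0 t) \<le> ell (norm (f - f0)) t"
      proof (intro ballI)
        fix f t assume f: "f \<in> ball f0 \<rho>" and t: "t \<in> {t0..<t0 + d}"
        have "norm (P f t - P f0 t) \<le> L0 * norm (f - f0) + M0 * \<bar>t - t\<bar>" by (rule Lip) (use f t \<rho> in auto)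
        then show "norm (P f t - P f0 t) \<le> ell (norm (f - f0)) t" unfolding ell_def by simp
      qed
    qed
    then show ?thesis by blast
  qed
  have part2: "\<forall>R' T' Er ell. local_data SF Em P D f0 t0 R' T' Er ell \<longrightarrow>
       (\<exists>R T. 0 < R \<and> ereal R < R' \<and> ereal t0 < T \<and> T \<le> T' \<and>
          (\<forall>t\<in>Ico_e t0 T. Er t + integral {t0..t} (\<lambda>s. u_m (t - s) * ell R s) \<le> R)) \<and>
       (\<forall>R T. 0 < R \<and> ereal R < R' \<and> ereal t0 < T \<and> T \<le> T' \<and>
          (\<forall>t\<in>Ico_e t0 T. Er t + integral {t0..t} (\<lambda>s. u_m (t - s) * ell R s) \<le> R) \<longrightarrow>
          (\<exists>\<phi>. VP_solution SF Em P D f0 t0 T \<phi> \<and>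
               (\<forall>t\<in>Ico_e t0 T. norm (\<phi> t - f0) \<le> R)))"
  proof (intro allI impI)
    fix R' T' Er ell assume ld: "local_data SF Em P D f0 t0 R' T' Er ell"
    note ldd = ld[unfolded local_data_def]
    have R'0: "0 < R'" using ldd by (elim conjE) assumption
    have T'0: "ereal t0 < T'" using ldd by (elim conjE) assumption
    have DD: "ball_e f0 R' \<times> Ico_e t0 T' \<subseteq> D" using ldd by (elim conjE) assumption
    have Erc: "continuous_on (Ico_e t0 T') Er" using ldd by (elim conjE) assumption
    have Ert0: "Er t0 = 0" using ldd by (elim conjE) assumption
    have Erb: "\<forall>t\<in>Ico_e t0 T'. norm (f0 - SF (t - t0) f0 - integral {t0..t} (\<lambda>s. Em (t - s) (P f0 s))) \<le> Er t"
      using ldd by (elim conjE) assumption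
    have ellc: "continuous_on (Ico_e 0 R' \<times> Ico_e t0 T') (\<lambda>(r, t). ell r t)" using ldd by (elim conjE) assumption
    have ell0: "\<forall>r\<in>Ico_e 0 R'. \<forall>t\<in>Ico_e t0 T'. 0 \<le> ell r t" using ldd by (elim conjE) assumption
    have ellm: "\<forall>t\<in>Ico_e t0 T'. mono_on (Ico_e 0 R') (\<lambda>r. ell r t)" using ldd by (elim conjE) assumption
    have ellP: "\<forall>f\<in>ball_e f0 R'. \<forall>t\<in>Ico_e t0 T'. norm (P f t - P f0 t) \<le> ell (norm (f - f0)) t"
      using ldd by (elim conjE) assumption
    have ellRc: "continuous_on A (\<lambda>s. ell R s)" if "R \<in> Ico_e 0 R'" "A \<subseteq> Ico_e t0 T'" for R A
    proof -
      have "continuous_on A (\<lambda>s. (\<lambda>(r, t). ell r t) (R, s))"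
        by (rule continuous_on_compose2[OF ellc]) (use that in \<open>auto intro!: continuous_intros\<close>)
      then show ?thesis by simp
    qed
    show "(\<exists>R T. 0 < R \<and> ereal R < R' \<and> ereal t0 < T \<and> T \<le> T' \<and>
          (\<forall>t\<in>Ico_e t0 T. Er t + integral {t0..t} (\<lambda>s. u_m (t - s) * ell R s) \<le> R)) \<and>
       (\<forall>R T. 0 < R \<and> ereal R < R' \<and> ereal t0 < T \<and> T \<le> T' \<and>
          (\<forall>t\<in>Ico_e t0 T. Er t + integral {t0..t} (\<lambda>s. u_m (t - s) * ell R s) \<le> R) \<longrightarrow>
          (\<exists>\<phi>. VP_solution SF Em P D f0 t0 T \<phi> \<and>
               (\<forall>t\<in>Ico_e t0 T. norm (\<phi> t - f0) \<le> R)))"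
    proof (rule conjI)
      obtain R where R: "0 < R" "ereal R < R'" using ereal_pos_real[OF R'0] by blast
      obtain t2 where t2: "ereal t0 < ereal t2" "ereal t2 < T'" using ereal_dense2[OF T'0] by blast
      have t2': "t0 < t2" using t2 by simp
      have I2: "{t0..t2} \<subseteq> Ico_e t0 T'" using t2 unfolding Ico_e_def by (auto intro: ereal_le_less)
      have Rin: "R \<in> Ico_e 0 R'" using R unfolding Ico_e_def by auto
      obtain N where N: "N \<ge> 0" "\<And>x. x \<in> {t0..t2} \<Longrightarrow> norm (ell R x) \<le> N"
        using bounded_on'[OF ellRc[OF Rin I2]] by blast
      have t0in: "t0 \<in> Ico_e t0 T'" using T'0 unfolding Ico_e_def by auto
      have "\<exists>\<eta>>0. \<forall>x'\<in>Ico_e t0 T'. dist x' t0 < \<eta> \<longrightarrow> dist (Er x') (Er t0) < R / 2"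
      proof -
        have "R / 2 > 0" using R(1) by simp
        then show ?thesis using Erc t0in unfolding continuous_on_iff by blast
      qed
      then obtain \<eta> where \<eta>: "\<eta> > 0" "\<And>x'. x' \<in> Ico_e t0 T' \<Longrightarrow> dist x' t0 < \<eta> \<Longrightarrow> dist (Er x') (Er t0) < R / 2"
        by blast
      obtain K where K: "K > 0" "\<forall>\<tau>. 0 < \<tau> \<longrightarrow> \<tau> \<le> t2 - t0 \<longrightarrow> u_m \<tau> \<le> K * \<tau> powr (\<sigma> - 1)"
        using umO[of "t2 - t0"] t2' by auto
      have KN0: "0 \<le> K * N" using K(1) N(1) by simp
      then have KN: "0 < K * N + 1" by linarith
      define X where "X = R * \<sigma> / (2 * (K * N + 1))"
      have X: "X > 0" unfolding X_def using R(1) P5(6) KN by simp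
      define h where "h = min (min (\<eta> / 2) (t2 - t0)) (X powr (1 / \<sigma>))"
      have h1: "h > 0" unfolding h_def using \<eta> t2' X by auto
      have h2: "h \<le> \<eta> / 2" unfolding h_def by (meson min.cobounded1 order_trans)
      have h3: "h \<le> t2 - t0" unfolding h_def by (meson min.cobounded1 min.cobounded2 order_trans)
      note h = h1 h2 h3
      have hX: "h powr \<sigma> \<le> X"
      proof -
        have "h powr \<sigma> \<le> (X powr (1 / \<sigma>)) powr \<sigma>" using h P5(6) unfolding h_def by (intro powr_mono2) auto
        also have "\<dots> = X" using P5(6) X by (simp add: powr_powr)
        finally show ?thesis .
      qed
      show "\<exists>R T. 0 < R \<and> ereal R < R' \<and> ereal t0 < T \<and> T \<le> T' \<and>
          (\<forall>t\<in>Ico_e t0 T. Er t + integral {t0..t} (\<lambda>s. u_m (t - s) * ell R s) \<le> R)"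
      proof (intro exI conjI)
        show "0 < R" "ereal R < R'" by (rule R)+
        show "ereal t0 < ereal (t0 + h)" using h by simp
        have "ereal (t0 + h) \<le> ereal t2" using h by simp
        then show "ereal (t0 + h) \<le> T'" using t2(2) by (meson less_imp_le order_trans)
        show "\<forall>t\<in>Ico_e t0 (ereal (t0 + h)). Er t + integral {t0..t} (\<lambda>s. u_m (t - s) * ell R s) \<le> R"
        proof
          fix t assume "t \<in> Ico_e t0 (ereal (t0 + h))"
          then have t: "t0 \<le> t" "t < t0 + h" by (auto simp: Ico_e_def)
          have tin: "t \<in> Ico_e t0 T'" using I2 t h by auto
          have "dist (Er t) (Er t0) < R / 2" by (rule \<eta>(2)[OF tin]) (use t h in \<open>auto simp: dist_real_def\<close>)
          then have Ert: "Er t < R / 2" using Ert0 by (simp add: dist_real_def)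
          have "integral {t0..t} (\<lambda>s. u_m (t - s) * ell R s) \<le> K * N * (((t - t0) powr \<sigma> - (t - t) powr \<sigma>) / \<sigma>)"
          proof (rule le_any)
            show "((\<lambda>s. K * N * (t - s) powr (\<sigma> - 1)) has_integral K * N * (((t - t0) powr \<sigma> - (t - t) powr \<sigma>) / \<sigma>)) {t0..t}"
              by (rule has_integral_mult_right, rule pow_int_right[OF P5(6)]) (use t in auto)
            show "0 \<le> K * N * (((t - t0) powr \<sigma> - (t - t) powr \<sigma>) / \<sigma>)" using KN0 P5(6) by simp
            fix s assume s: "s \<in> {t0<..<t}"
            have sI: "s \<in> {t0..t2}" using s t h by auto
            have "u_m (t - s) * ell R s \<le> (K * (t - s) powr (\<sigma> - 1)) * N"
            proof (rule mult_mono)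
              show "u_m (t - s) \<le> K * (t - s) powr (\<sigma> - 1)" using K(2) s t h by auto
              show "ell R s \<le> N" using N(2)[OF sI] by simp
              show "0 \<le> K * (t - s) powr (\<sigma> - 1)" using K by simp
              show "0 \<le> ell R s" using ell0 Rin I2 sI by blast
            qed
            then show "u_m (t - s) * ell R s \<le> K * N * (t - s) powr (\<sigma> - 1)" by (simp add: algebra_simps)
          qed
          also have "\<dots> = K * N * ((t - t0) powr \<sigma> / \<sigma>)" using P5(6) by simp
          also have "\<dots> \<le> (K * N + 1) * (X / \<sigma>)"
          proof (rule mult_mono)
            have "(t - t0) powr \<sigma> \<le> h powr \<sigma>" using t P5(6) by (intro powr_mono2) auto
            then show "(t - t0) powr \<sigma> / \<sigma> \<le> X / \<sigma>" using hX P5(6) by (simp add: divide_right_mono)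
          qed (use KN0 X P5(6) in auto)
          also have "\<dots> = R / 2" unfolding X_def using KN P5(6) by (simp add: divide_simps)
          finally show "Er t + integral {t0..t} (\<lambda>s. u_m (t - s) * ell R s) \<le> R" using Ert by simp
        qed
      qed
    next
      show "\<forall>R T. 0 < R \<and> ereal R < R' \<and> ereal t0 < T \<and> T \<le> T' \<and>
          (\<forall>t\<in>Ico_e t0 T. Er t + integral {t0..t} (\<lambda>s. u_m (t - s) * ell R s) \<le> R) \<longrightarrow>
          (\<exists>\<phi>. VP_solution SF Em P D f0 t0 T \<phi> \<and>
               (\<forall>t\<in>Ico_e t0 T. norm (\<phi> t - f0) \<le> R))"
      proof (intro allI impI, elim conjE)
        fix R T assume R: "0 < R" "ereal R < R'" and T: "ereal t0 < T" "T \<le> T'"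
          and hyp: "\<forall>t\<in>Ico_e t0 T. Er t + integral {t0..t} (\<lambda>s. u_m (t - s) * ell R s) \<le> R"
        have Rin: "R \<in> Ico_e 0 R'" using R unfolding Ico_e_def by auto
        have IcT: "t \<in> Ico_e t0 T" if "ereal c < T" "t0 \<le> t" "t \<le> c" for c t
          using that unfolding Ico_e_def by (auto intro: ereal_le_less)
        have IcT': "t \<in> Ico_e t0 T'" if "t \<in> Ico_e t0 T" for t
          using that T(2) unfolding Ico_e_def by (auto intro: less_le_trans)
        have inball: "f \<in> ball_e f0 R'" if "norm (f - f0) \<le> R" for f
        proof -
          have "ereal (dist f f0) < R'" by (rule ereal_le_less[of _ R]) (use that R(2) in \<open>auto simp: dist_norm\<close>)
          then show ?thesis unfolding ball_e_def by auto
        qed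
        have pic: "\<exists>L. picard Em u_m \<sigma> SF P f0 t0 c R L (\<lambda>s. ell R s)" if c: "t0 \<le> c" "ereal c < T" for c
        proof -
          have cT': "{t0..c} \<subseteq> Ico_e t0 T'" using IcT[OF c(2)] IcT' by auto
          define C where "C = cball f0 R \<times> {t0..c}"
          have CD: "C \<subseteq> D"
          proof
            fix x assume "x \<in> C"
            then obtain f t where x: "x = (f, t)" "dist f0 f \<le> R" "t \<in> {t0..c}" unfolding C_def by auto
            have "norm (f - f0) \<le> R" using x(2) by (simp add: dist_norm norm_minus_commute[of f0 f])
            then have "f \<in> ball_e f0 R'" by (rule inball)
            then show "x \<in> D" using DD x cT' by auto
          qed
          have Cc: "closed C" "bounded C" unfolding C_def by (auto intro: closed_Times bounded_Times)
          obtain L0 M0 where LM: "0 \<le> L0" "0 \<le> M0"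
            "\<forall>(f, t)\<in>C. \<forall>(f', t')\<in>C. norm (P f t - P f' t') \<le> L0 * norm (f - f') + M0 * \<bar>t - t'\<bar>"
            using P6(2) Cc CD by meson
          have Lip2: "norm (P f t - P f' t') \<le> L0 * norm (f - f') + M0 * \<bar>t - t'\<bar>"
            if "(f, t) \<in> C" "(f', t') \<in> C" for f t f' t'
            using LM(3) that by fastforce
          define L where "L = max L0 M0 + 1"
          have L: "0 < L" "L0 \<le> L" "M0 \<le> L" unfolding L_def using LM by auto
          show ?thesis
          proof (intro exI[of _ L] picard.intro[OF cr] picard_axioms.intro)
            show "t0 \<le> c" by (rule c)
            show "0 \<le> R" using R by simp
            show "0 < L" by (rule L)
            show "continuous_on {t0..c} (\<lambda>t. SF (t - t0) f0)" by (rule SF_cont_comp[OF P4(2)]) auto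
            show "norm (P f t - P f' t') \<le> L * norm (f - f') + L * \<bar>t - t'\<bar>"
              if "norm (f - f0) \<le> R" "norm (f' - f0) \<le> R" "t \<in> {t0..c}" "t' \<in> {t0..c}" for f f' t t'
            proof -
              have "dist f0 f \<le> R" "dist f0 f' \<le> R" using that by (simp_all add: dist_norm norm_minus_commute[of f0])
              then have "(f, t) \<in> C" "(f', t') \<in> C" using that unfolding C_def by auto
              then have "norm (P f t - P f' t') \<le> L0 * norm (f - f') + M0 * \<bar>t - t'\<bar>" by (rule Lip2)
              also have "\<dots> \<le> L * norm (f - f') + L * \<bar>t - t'\<bar>"
                using L by (intro add_mono mult_right_mono) auto
              finally show ?thesis .
            qed
            show "continuous_on {t0..c} (\<lambda>s. ell R s)" by (rule ellRc[OF Rin cT'])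
            show "norm (P f t - P f0 t) \<le> ell R t" if "norm (f - f0) \<le> R" "t \<in> {t0..c}" for f t
            proof -
              have tin: "t \<in> Ico_e t0 T'" using cT' that by auto
              have "norm (P f t - P f0 t) \<le> ell (norm (f - f0)) t" using ellP inball[OF that(1)] tin by blast
              also have "\<dots> \<le> ell R t"
              proof (rule mono_onD[OF bspec[OF ellm tin]])
                show "norm (f - f0) \<in> Ico_e 0 R'" unfolding Ico_e_def using that(1) R(2) by (auto intro: ereal_le_less)
              qed (use Rin that in auto)
              finally show ?thesis .
            qed
            show "norm (f0 - SF (t - t0) f0 - integral {t0..t} (\<lambda>s. Em (t - s) (P f0 s))) +
                integral {t0..t} (\<lambda>s. u_m (t - s) * ell R s) \<le> R" if "t \<in> {t0..c}" for t
            proof -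
              have tin: "t \<in> Ico_e t0 T" using IcT[OF c(2)] that by auto
              have "norm (f0 - SF (t - t0) f0 - integral {t0..t} (\<lambda>s. Em (t - s) (P f0 s))) \<le> Er t"
                using Erb IcT'[OF tin] by blast
              moreover have "Er t + integral {t0..t} (\<lambda>s. u_m (t - s) * ell R s) \<le> R" using hyp tin by blast
              ultimately show ?thesis by linarith
            qed
          qed
        qed
        define Sol where "Sol c \<phi> \<longleftrightarrow> continuous_on {t0..c} \<phi> \<and> (\<forall>t\<in>{t0..c}. norm (\<phi> t - f0) \<le> R) \<and>
           (\<forall>t\<in>{t0..c}. (\<lambda>s. Em (t - s) (P (\<phi> s) s)) integrable_on {t0..t} \<and>
                SF (t - t0) f0 + integral {t0..t} (\<lambda>s. Em (t - s) (P (\<phi> s) s)) = \<phi> t)" for c \<phi>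
        have solex: "\<exists>\<phi>. Sol c \<phi>" if cc: "t0 \<le> c" "ereal c < T" for c
        proof -
          obtain L where pc: "picard Em u_m \<sigma> SF P f0 t0 c R L (\<lambda>s. ell R s)" using pic[OF cc] by blast
          show ?thesis using picard.exist'[OF pc] unfolding Sol_def .
        qed
        have soluniq: "\<phi> t = \<psi> t" if hh: "t0 \<le> c" "ereal c < T" "Sol c \<phi>" "Sol c \<psi>" "t \<in> {t0..c}" for c \<phi> \<psi> t
        proof -
          obtain L where pc: "picard Em u_m \<sigma> SF P f0 t0 c R L (\<lambda>s. ell R s)" using pic[OF hh(1,2)] by blast
          have s1: "continuous_on {t0..c} \<phi>" "\<forall>t\<in>{t0..c}. norm (\<phi> t - f0) \<le> R"
            "\<forall>t\<in>{t0..c}. SF (t - t0) f0 + integral {t0..t} (\<lambda>s. Em (t - s) (P (\<phi> s) s)) = \<phi> t"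
            using hh(3) unfolding Sol_def by auto
          have s2: "continuous_on {t0..c} \<psi>" "\<forall>t\<in>{t0..c}. norm (\<psi> t - f0) \<le> R"
            "\<forall>t\<in>{t0..c}. SF (t - t0) f0 + integral {t0..t} (\<lambda>s. Em (t - s) (P (\<psi> s) s)) = \<psi> t"
            using hh(4) unfolding Sol_def by auto
          show ?thesis by (rule picard.uniq'[OF pc s1 s2 hh(5)])
        qed
        have solr: "Sol c' \<phi>" if "Sol c \<phi>" "c' \<le> c" for c c' \<phi>
          using that unfolding Sol_def by (auto intro: continuous_on_subset)
        define sol where "sol c = (SOME \<phi>. Sol c \<phi>)" for c
        have solS: "Sol c (sol c)" if "t0 \<le> c" "ereal c < T" for c
          unfolding sol_def by (rule someI_ex[OF solex[OF that]])
        define \<phi> where "\<phi> t = sol t t" for t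
        have agree: "\<phi> t = sol c t" if "t0 \<le> c" "ereal c < T" "t \<in> {t0..c}" for c t
        proof -
          have tT: "ereal t < T" using that by (auto intro: ereal_le_less)
          have A: "Sol t (sol t)" by (rule solS) (use that tT in auto)
          have B: "Sol t (sol c)" by (rule solr[OF solS[OF that(1,2)]]) (use that in auto)
          have "sol t t = sol c t" using soluniq[OF _ tT A B] that by auto
          then show ?thesis unfolding \<phi>_def .
        qed
        have bnd: "\<forall>t\<in>Ico_e t0 T. norm (\<phi> t - f0) \<le> R"
        proof
          fix t assume t: "t \<in> Ico_e t0 T"
          then have tt: "t0 \<le> t" "ereal t < T" by (auto simp: Ico_e_def)
          from solS[OF tt] show "norm (\<phi> t - f0) \<le> R" unfolding Sol_def \<phi>_def using tt by auto
        qed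
        show "\<exists>\<phi>. VP_solution SF Em P D f0 t0 T \<phi> \<and> (\<forall>t\<in>Ico_e t0 T. norm (\<phi> t - f0) \<le> R)"
        proof (intro exI conjI)
          show "\<forall>t\<in>Ico_e t0 T. norm (\<phi> t - f0) \<le> R" by (rule bnd)
          show "VP_solution SF Em P D f0 t0 T \<phi>"
            unfolding VP_solution_def
          proof (intro conjI ballI)
            show "ereal t0 < T" by (rule T(1))
            show "continuous_on (Ico_e t0 T) \<phi>" unfolding continuous_on_eq_continuous_within
            proof
              fix x assume x: "x \<in> Ico_e t0 T"
              obtain c where c: "ereal x < ereal c" "ereal c < T"
                using ereal_dense2[of "ereal x" T] x by (auto simp: Ico_e_def)
              have xc: "t0 \<le> x" "x < c" using x c by (auto simp: Ico_e_def)
              have yT: "ereal y < T" if "y \<le> c" for y using c(2) that by (auto intro: ereal_le_less)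
              have "continuous_on {t0..c} (sol c)" using solS[of c] xc c unfolding Sol_def by auto
              then have "continuous (at x within {t0..c}) (sol c)"
                using xc by (simp add: continuous_on_eq_continuous_within)
              then have "continuous (at x within {t0..c}) \<phi>"
                by (rule continuous_transform_within[of _ _ _ 1]) (use agree[of c] xc c in auto)
              moreover have "at x within Ico_e t0 T = at x within {t0..c}"
              proof (rule at_within_nhd[of _ "{..<c}"])
                show "x \<in> {..<c}" using xc by simp
                show "open {..<c}" by simp
                have "Ico_e t0 T \<inter> {..<c} = {t0..c} \<inter> {..<c}"
                proof
                  show "Ico_e t0 T \<inter> {..<c} \<subseteq> {t0..c} \<inter> {..<c}" unfolding Ico_e_def by auto
                  show "{t0..c} \<inter> {..<c} \<subseteq> Ico_e t0 T \<inter> {..<c}" unfolding Ico_e_def using yT by auto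
                qed
                then show "Ico_e t0 T \<inter> {..<c} - {x} = {t0..c} \<inter> {..<c} - {x}" by simp
              qed
              ultimately show "continuous (at x within Ico_e t0 T) \<phi>" unfolding continuous_within by simp
            qed
          next
            fix t assume t: "t \<in> Ico_e t0 T"
            have tt: "t0 \<le> t" "ereal t < T" using t by (auto simp: Ico_e_def)
            have S: "Sol t (sol t)" by (rule solS[OF tt])
            have "\<phi> t \<in> ball_e f0 R'" by (rule inball) (use bnd t in blast)
            then show "(\<phi> t, t) \<in> D" using DD IcT'[OF t] by auto
            show "((\<lambda>s. Em (t - s) (P (\<phi> s) s)) has_integral (\<phi> t - SF (t - t0) f0)) {t0..t}"
            proof (rule has_integral_eq[of _ "\<lambda>s. Em (t - s) (P (sol t s) s)"])
              show "Em (t - x) (P (sol t x) x) = Em (t - x) (P (\<phi> x) x)" if "x \<in> {t0..t}" for x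
                using agree[OF tt that] by simp
              have Iint: "(\<lambda>s. Em (t - s) (P (sol t s) s)) integrable_on {t0..t}"
                and eq: "SF (t - t0) f0 + integral {t0..t} (\<lambda>s. Em (t - s) (P (sol t s) s)) = sol t t"
                using S tt unfolding Sol_def by auto
              show "((\<lambda>s. Em (t - s) (P (sol t s) s)) has_integral (\<phi> t - SF (t - t0) f0)) {t0..t}"
              proof -
                have "((\<lambda>s. Em (t - s) (P (sol t s) s)) has_integral integral {t0..t} (\<lambda>s. Em (t - s) (P (sol t s) s))) {t0..t}"
                  by (rule integrable_integral[OF Iint])
                moreover have "integral {t0..t} (\<lambda>s. Em (t - s) (P (sol t s) s)) = \<phi> t - SF (t - t0) f0"
                  unfolding \<phi>_def using eq[symmetric] by simp
                ultimately show ?thesis by simp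
              qed
            qed
          qed
        qed
      qed
    qed
  qed
  show ?thesis using part1 part2 by blast
qed



end
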